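(* Let $A$ be a $B$-module algebra and $V$ a $B$-equivariant $A$-bimodule. Let $J_n(A,B,V)=\sum_{b\in B}{\rm im}\big([L_b,\partial_{n+1}]:{\rm CH}_{n+1}(A,V)\to{\rm CH}_n(A,V)\big)$. Then $J_*(A,B,V)$ is both a differential graded $k$-submodule and a graded $B$-submodule (for the diagonal action $L$) of ${\rm CH}_*(A,V)$, and the quotient ${\rm QCH}_*(A,B,V):={\rm CH}_*(A,V)/J_*(A,B,V)$ is a differential graded $B$-module, i.e. the induced differential on it is $B$-linear.
   Context: $k$ is a field, all tensor products are over $k$, and $B$ is a bialgebra over $k$ with Sweedler notation $\Delta(b)=b_{(1)}\otimes b_{(2)}$ and counit $\varepsilon$. A $B$-module algebra is an associative $k$-algebra $A$ which is a left $B$-module with $b(a_1a_2)=b_{(1)}(a_1)b_{(2)}(a_2)$. A $B$-equivariant $A$-bimodule is an $A$-bimodule $V$ which is a left $B$-module with $b(av)=b_{(1)}(a)b_{(2)}(v)$ and $b(va)=b_{(1)}(v)b_{(2)}(a)$. The Hochschild complex ${\rm CH}_*(A,V)$ has ${\rm CH}_n(A,V)=A^{\otimes n}\otimes V$ with face maps $\partial_j$, $0\le j\le n$: $\partial_j(a_1\otimes\cdots\otimes a_n\otimes v)=(\cdots\otimes a_{j+1}a_{j+2}\otimes\cdots\otimes v)$ for $0\le j<n-1$, $\partial_{n-1}(\ldots)=a_1\otimes\cdots\otimes a_{n-1}\otimes a_nv$, $\partial_n(\ldots)=a_2\otimes\cdots\otimes a_n\otimes va_1$, and $d^{\rm CH}_n=\sum_{j=0}^n(-1)^j\partial_j$.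 $B$ acts diagonally: $L_b(a_1\otimes\cdots\otimes a_n\otimes v)=b_{(1)}(a_1)\otimes\cdots\otimes b_{(n)}(a_n)\otimes b_{(n+1)}(v)$; $[L_b,\partial_{n+1}]=L_b\partial_{n+1}-\partial_{n+1}L_b$. *)

theory Defs
  imports Complex_Main "HOL-Library.Function_Algebras"
begin

text \<open>An element of the free k-vector space on a type 'x is represented by a finitely
supported function 'x => 'k.  Tensor products are the free vector space on tuples
(lists) modulo the subspace spanned by the multilinearity relations; we work with
representatives and the relation subspace explicitly.\<close>

definition fsupp :: "('x \<Rightarrow> 'k::zero) \<Rightarrow> 'x set" where
  "fsupp f = {x. f x \<noteq> 0}"

definition fsingle :: "'x \<Rightarrow> 'x \<Rightarrow> 'k::{zero,one}" where
  "fsingle z = (\<lambda>w. if w = z then 1 else 0)"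

definition fsc :: "'k::times \<Rightarrow> ('x \<Rightarrow> 'k) \<Rightarrow> ('x \<Rightarrow> 'k)" where
  "fsc c f = (\<lambda>x. c * f x)"

definition lin_ext :: "('k::zero \<Rightarrow> 'y \<Rightarrow> 'y::comm_monoid_add) \<Rightarrow> ('x \<Rightarrow> 'y) \<Rightarrow> ('x \<Rightarrow> 'k) \<Rightarrow> 'y" where
  "lin_ext sc g f = (\<Sum>x\<in>fsupp f. sc (f x) (g x))"

definition tens_rep :: "nat \<Rightarrow> ('x list \<Rightarrow> 'k::zero) set" where
  "tens_rep n = {f. finite (fsupp f) \<and> (\<forall>xs\<in>fsupp f. length xs = n)}"

definition list_rel_gen :: "('k::field \<Rightarrow> 'x::ab_group_add \<Rightarrow> 'x) \<Rightarrow> nat \<Rightarrow> ('x list \<Rightarrow> 'k) set" where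
  "list_rel_gen sc n =
     {fsingle (xs[i := x + y]) - fsingle (xs[i := x]) - fsingle (xs[i := y]) | xs i x y.
        length xs = n \<and> i < n}
   \<union> {fsingle (xs[i := sc c x]) - fsc c (fsingle (xs[i := x])) | xs i c x.
        length xs = n \<and> i < n}"

definition tens_rel :: "('k::field \<Rightarrow> 'x::ab_group_add \<Rightarrow> 'x) \<Rightarrow> nat \<Rightarrow> ('x list \<Rightarrow> 'k) set" where
  "tens_rel sc n = module.span fsc (list_rel_gen sc n)"

definition tcat :: "('x list \<Rightarrow> 'k::field) \<Rightarrow> ('x list \<Rightarrow> 'k) \<Rightarrow> ('x list \<Rightarrow> 'k)" where
  "tcat f g = (\<Sum>xs\<in>fsupp f. \<Sum>ys\<in>fsupp g. fsc (f xs * g ys) (fsingle (xs @ ys)))"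

definition tmul :: "('x::times list \<Rightarrow> 'k::field) \<Rightarrow> ('x list \<Rightarrow> 'k) \<Rightarrow> ('x list \<Rightarrow> 'k)" where
  "tmul f g = (\<Sum>xs\<in>fsupp f. \<Sum>ys\<in>fsupp g. fsc (f xs * g ys) (fsingle (map2 (*) xs ys)))"

text \<open>B is a k-algebra (type 'b, scalar multiplication sB); the coproduct Delta b is given
by a representative in B (x) B (lists of length 2), the counit is eps.\<close>
definition k_algebra :: "('k::field \<Rightarrow> 'a::ring \<Rightarrow> 'a) \<Rightarrow> bool" where
  "k_algebra sc \<longleftrightarrow> vector_space sc \<and>
     (\<forall>c x y. sc c (x * y) = sc c x * y \<and> sc c (x * y) = x * sc c y)"

definition bialgebra :: "('k::field \<Rightarrow> 'b::ring_1 \<Rightarrow> 'b) \<Rightarrow> ('b \<Rightarrow> 'b list \<Rightarrow> 'k) \<Rightarrow> ('b \<Rightarrow> 'k) \<Rightarrow> bool" where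
  "bialgebra sB Delta eps \<longleftrightarrow>
     k_algebra sB \<and>
     (\<forall>b. Delta b \<in> tens_rep 2) \<and>
     \<comment> \<open>Delta is k-linear (as a map into B (x) B)\<close>
     (\<forall>b b'. Delta (b + b') - (Delta b + Delta b') \<in> tens_rel sB 2) \<and>
     (\<forall>c b. Delta (sB c b) - fsc c (Delta b) \<in> tens_rel sB 2) \<and>
     \<comment> \<open>coassociativity\<close>
     (\<forall>b. lin_ext fsc (\<lambda>xs. tcat (Delta (xs!0)) (fsingle [xs!1])) (Delta b)
          - lin_ext fsc (\<lambda>xs. tcat (fsingle [xs!0]) (Delta (xs!1))) (Delta b) \<in> tens_rel sB 3) \<and>
     \<comment> \<open>eps is k-linear, counit axioms\<close>
     (\<forall>b b'. eps (b + b') = eps b + eps b') \<and> (\<forall>c b. eps (sB c b) = c * eps b) \<and>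
     (\<forall>b. lin_ext sB (\<lambda>xs. sB (eps (xs!0)) (xs!1)) (Delta b) = b) \<and>
     (\<forall>b. lin_ext sB (\<lambda>xs. sB (eps (xs!1)) (xs!0)) (Delta b) = b) \<and>
     \<comment> \<open>Delta and eps are unital algebra maps\<close>
     (\<forall>b b'. Delta (b * b') - tmul (Delta b) (Delta b') \<in> tens_rel sB 2) \<and>
     Delta 1 - fsingle [1, 1] \<in> tens_rel sB 2 \<and>
     (\<forall>b b'. eps (b * b') = eps b * eps b') \<and> eps 1 = 1"

text \<open>Iterated coproduct: iter_cop Delta m b represents Delta^(m+1)(b) = b_(1) (x) ... (x) b_(m+1).\<close>
fun iter_cop :: "('b \<Rightarrow> 'b list \<Rightarrow> 'k::field) \<Rightarrow> nat \<Rightarrow> 'b \<Rightarrow> 'b list \<Rightarrow> 'k" where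
  "iter_cop Delta 0 b = fsingle [b]"
| "iter_cop Delta (Suc m) b =
     lin_ext fsc (\<lambda>xs. tcat (Delta (hd xs)) (fsingle (tl xs))) (iter_cop Delta m b)"

definition left_module :: "('k::field \<Rightarrow> 'b::ring_1 \<Rightarrow> 'b) \<Rightarrow> ('k \<Rightarrow> 'm::ab_group_add \<Rightarrow> 'm)
    \<Rightarrow> ('b \<Rightarrow> 'm \<Rightarrow> 'm) \<Rightarrow> bool" where
  "left_module sB sM act \<longleftrightarrow> vector_space sM \<and>
     (\<forall>b b' m. act (b + b') m = act b m + act b' m) \<and>
     (\<forall>c b m. act (sB c b) m = sM c (act b m)) \<and>
     (\<forall>b m m'. act b (m + m') = act b m + act b m') \<and>
     (\<forall>c b m. act b (sM c m) = sM c (act b m)) \<and>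
     (\<forall>m. act 1 m = m) \<and>
     (\<forall>b b' m. act (b * b') m = act b (act b' m))"

definition module_algebra :: "('k::field \<Rightarrow> 'b::ring_1 \<Rightarrow> 'b) \<Rightarrow> ('b \<Rightarrow> 'b list \<Rightarrow> 'k)
    \<Rightarrow> ('k \<Rightarrow> 'a::ring \<Rightarrow> 'a) \<Rightarrow> ('b \<Rightarrow> 'a \<Rightarrow> 'a) \<Rightarrow> bool" where
  "module_algebra sB Delta sA actA \<longleftrightarrow> k_algebra sA \<and> left_module sB sA actA \<and>
     (\<forall>b a1 a2. actA b (a1 * a2) = lin_ext sA (\<lambda>xs. actA (xs!0) a1 * actA (xs!1) a2) (Delta b))"

definition bimodule :: "('k::field \<Rightarrow> 'a::ring \<Rightarrow> 'a) \<Rightarrow> ('k \<Rightarrow> 'v::ab_group_add \<Rightarrow> 'v)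
    \<Rightarrow> ('a \<Rightarrow> 'v \<Rightarrow> 'v) \<Rightarrow> ('v \<Rightarrow> 'a \<Rightarrow> 'v) \<Rightarrow> bool" where
  "bimodule sA sV lA rA \<longleftrightarrow> vector_space sV \<and>
     (\<forall>a a' v. lA (a + a') v = lA a v + lA a' v) \<and>
     (\<forall>a v v'. lA a (v + v') = lA a v + lA a v') \<and>
     (\<forall>c a v. lA (sA c a) v = sV c (lA a v)) \<and>
     (\<forall>c a v. lA a (sV c v) = sV c (lA a v)) \<and>
     (\<forall>a a' v. rA v (a + a') = rA v a + rA v a') \<and>
     (\<forall>a v v'. rA (v + v') a = rA v a + rA v' a) \<and>
     (\<forall>c a v. rA v (sA c a) = sV c (rA v a)) \<and>
     (\<forall>c a v. rA (sV c v) a = sV c (rA v a)) \<and>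
     (\<forall>a a' v. lA (a * a') v = lA a (lA a' v)) \<and>
     (\<forall>a a' v. rA v (a * a') = rA (rA v a) a') \<and>
     (\<forall>a a' v. lA a (rA v a') = rA (lA a v) a')"

definition equivariant_bimodule :: "('k::field \<Rightarrow> 'b::ring_1 \<Rightarrow> 'b) \<Rightarrow> ('b \<Rightarrow> 'b list \<Rightarrow> 'k)
    \<Rightarrow> ('k \<Rightarrow> 'a::ring \<Rightarrow> 'a) \<Rightarrow> ('b \<Rightarrow> 'a \<Rightarrow> 'a)
    \<Rightarrow> ('k \<Rightarrow> 'v::ab_group_add \<Rightarrow> 'v) \<Rightarrow> ('a \<Rightarrow> 'v \<Rightarrow> 'v) \<Rightarrow> ('v \<Rightarrow> 'a \<Rightarrow> 'v) \<Rightarrow> ('b \<Rightarrow> 'v \<Rightarrow> 'v) \<Rightarrow> bool" where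
  "equivariant_bimodule sB Delta sA actA sV lA rA actV \<longleftrightarrow>
     bimodule sA sV lA rA \<and> left_module sB sV actV \<and>
     (\<forall>b a v. actV b (lA a v) = lin_ext sV (\<lambda>xs. lA (actA (xs!0) a) (actV (xs!1) v)) (Delta b)) \<and>
     (\<forall>b a v. actV b (rA v a) = lin_ext sV (\<lambda>xs. rA (actV (xs!0) v) (actA (xs!1) a)) (Delta b))"

text \<open>CH_n(A,V) = A^(x)n (x) V: representatives are finitely supported functions on pairs
(a_1..a_n, v) with a list of length n, modulo the multilinearity relations ch_rel n.\<close>
definition ch_rep :: "nat \<Rightarrow> ('a list \<times> 'v \<Rightarrow> 'k::zero) set" where
  "ch_rep n = {f. finite (fsupp f) \<and> (\<forall>p\<in>fsupp f. length (fst p) = n)}"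

definition ch_rel_gen :: "('k::field \<Rightarrow> 'a::ab_group_add \<Rightarrow> 'a) \<Rightarrow> ('k \<Rightarrow> 'v::ab_group_add \<Rightarrow> 'v)
    \<Rightarrow> nat \<Rightarrow> ('a list \<times> 'v \<Rightarrow> 'k) set" where
  "ch_rel_gen sA sV n =
     {fsingle (as[i := x + y], v) - fsingle (as[i := x], v) - fsingle (as[i := y], v) | as i x y v.
        length as = n \<and> i < n}
   \<union> {fsingle (as[i := sA c x], v) - fsc c (fsingle (as[i := x], v)) | as i c x v.
        length as = n \<and> i < n}
   \<union> {fsingle (as, v + w) - fsingle (as, v) - fsingle (as, w) | as v w. length as = n}
   \<union> {fsingle (as, sV c v) - fsc c (fsingle (as, v)) | as c v. length as = n}"

definition ch_rel :: "('k::field \<Rightarrow> 'a::ab_group_add \<Rightarrow> 'a) \<Rightarrow> ('k \<Rightarrow> 'v::ab_group_add \<Rightarrow> 'v)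
    \<Rightarrow> nat \<Rightarrow> ('a list \<times> 'v \<Rightarrow> 'k) set" where
  "ch_rel sA sV n = module.span fsc (ch_rel_gen sA sV n)"

definition face_basis :: "('a \<Rightarrow> 'v \<Rightarrow> 'v) \<Rightarrow> ('v \<Rightarrow> 'a \<Rightarrow> 'v) \<Rightarrow> nat \<Rightarrow> nat
    \<Rightarrow> 'a::times list \<times> 'v \<Rightarrow> 'a list \<times> 'v" where
  "face_basis lA rA n j p = (case p of (as, v) \<Rightarrow>
     if j + 1 < n then (take j as @ [as!j * as!(j+1)] @ drop (j+2) as, v)
     else if j + 1 = n then (butlast as, lA (last as) v)
     else (tl as, rA v (hd as)))"

definition face :: "('a \<Rightarrow> 'v \<Rightarrow> 'v) \<Rightarrow> ('v \<Rightarrow> 'a \<Rightarrow> 'v) \<Rightarrow> nat \<Rightarrow> nat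
    \<Rightarrow> ('a::times list \<times> 'v \<Rightarrow> 'k::field) \<Rightarrow> ('a list \<times> 'v \<Rightarrow> 'k)" where
  "face lA rA n j f = lin_ext fsc (\<lambda>p. fsingle (face_basis lA rA n j p)) f"

definition dCH :: "('a \<Rightarrow> 'v \<Rightarrow> 'v) \<Rightarrow> ('v \<Rightarrow> 'a \<Rightarrow> 'v) \<Rightarrow> nat
    \<Rightarrow> ('a::times list \<times> 'v \<Rightarrow> 'k::field) \<Rightarrow> ('a list \<times> 'v \<Rightarrow> 'k)" where
  "dCH lA rA n f = (\<Sum>j\<le>n. fsc ((-1) ^ j) (face lA rA n j f))"

definition Lact :: "('b \<Rightarrow> 'b list \<Rightarrow> 'k::field) \<Rightarrow> ('b \<Rightarrow> 'a \<Rightarrow> 'a) \<Rightarrow> ('b \<Rightarrow> 'v \<Rightarrow> 'v)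
    \<Rightarrow> nat \<Rightarrow> 'b \<Rightarrow> ('a list \<times> 'v \<Rightarrow> 'k) \<Rightarrow> ('a list \<times> 'v \<Rightarrow> 'k)" where
  "Lact Delta actA actV n b f =
     lin_ext fsc (\<lambda>(as, v). lin_ext fsc
        (\<lambda>bs. fsingle (map2 actA (take n bs) as, actV (bs!n) v)) (iter_cop Delta n b)) f"

definition commL :: "('b \<Rightarrow> 'b list \<Rightarrow> 'k::field) \<Rightarrow> ('b \<Rightarrow> 'a::times \<Rightarrow> 'a) \<Rightarrow> ('b \<Rightarrow> 'v \<Rightarrow> 'v)
    \<Rightarrow> ('a \<Rightarrow> 'v \<Rightarrow> 'v) \<Rightarrow> ('v \<Rightarrow> 'a \<Rightarrow> 'v)
    \<Rightarrow> nat \<Rightarrow> 'b \<Rightarrow> ('a list \<times> 'v \<Rightarrow> 'k) \<Rightarrow> ('a list \<times> 'v \<Rightarrow> 'k)" where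
  "commL Delta actA actV lA rA n b f =
     Lact Delta actA actV n b (face lA rA (n+1) (n+1) f)
     - face lA rA (n+1) (n+1) (Lact Delta actA actV (n+1) b f)"

text \<open>J_n(A,B,V) = sum over b of im [L_b, partial_(n+1)], given as its preimage in the
space of representatives (i.e. including the relation subspace ch_rel n).\<close>
definition Jsub :: "('k::field \<Rightarrow> 'a::ring \<Rightarrow> 'a) \<Rightarrow> ('k \<Rightarrow> 'v::ab_group_add \<Rightarrow> 'v)
    \<Rightarrow> ('b \<Rightarrow> 'b list \<Rightarrow> 'k) \<Rightarrow> ('b \<Rightarrow> 'a \<Rightarrow> 'a) \<Rightarrow> ('b \<Rightarrow> 'v \<Rightarrow> 'v)
    \<Rightarrow> ('a \<Rightarrow> 'v \<Rightarrow> 'v) \<Rightarrow> ('v \<Rightarrow> 'a \<Rightarrow> 'v) \<Rightarrow> nat \<Rightarrow> ('a list \<times> 'v \<Rightarrow> 'k) set" where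
  "Jsub sA sV Delta actA actV lA rA n =
     module.span fsc ({commL Delta actA actV lA rA n b f | b f. f \<in> ch_rep (Suc n)}
                      \<union> ch_rel sA sV n)"

end

theory Submission
  imports Defs
begin

lemma module_fsc: "module (fsc :: 'k::field \<Rightarrow> ('x \<Rightarrow> 'k) \<Rightarrow> ('x \<Rightarrow> 'k))"
  by unfold_locales (auto simp: fsc_def fun_eq_iff algebra_simps)

interpretation fs: module "fsc :: 'k::field \<Rightarrow> ('x \<Rightarrow> 'k) \<Rightarrow> ('x \<Rightarrow> 'k)"
  by (rule module_fsc)

abbreviation fin :: "('x \<Rightarrow> 'k::zero) \<Rightarrow> bool" where
  "fin f \<equiv> finite (fsupp f)"

lemma fsc_apply: "fsc c f x = c * f x" by (simp add: fsc_def)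

lemma fsupp_fsingle[simp]: "fsupp (fsingle z :: 'x \<Rightarrow> 'k::field) = {z}"
  by (auto simp: fsupp_def fsingle_def)

lemma fin_add: "fin (f :: 'x \<Rightarrow> 'k::field) \<Longrightarrow> fin g \<Longrightarrow> fin (f + g)"
  by (rule finite_subset[of _ "fsupp f \<union> fsupp g"]) (auto simp: fsupp_def)
lemma fin_diff: "fin (f :: 'x \<Rightarrow> 'k::field) \<Longrightarrow> fin g \<Longrightarrow> fin (f - g)"
  by (rule finite_subset[of _ "fsupp f \<union> fsupp g"]) (auto simp: fsupp_def)
lemma fin_uminus: "fin (f :: 'x \<Rightarrow> 'k::field) \<Longrightarrow> fin (- f)"
  by (rule finite_subset[of _ "fsupp f"]) (auto simp: fsupp_def)
lemma fin_fsc: "fin f \<Longrightarrow> fin (fsc c (f :: 'x \<Rightarrow> 'k::field))"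
  by (rule finite_subset[of _ "fsupp f"]) (auto simp: fsupp_def fsc_def)
lemma fin_zero[simp]: "fin (0 :: 'x \<Rightarrow> 'k::zero)"
  by (simp add: fsupp_def)
lemma fin_fsingle[simp]: "fin (fsingle z :: 'x \<Rightarrow> 'k::field)"
  by simp
lemma fin_sum: "(\<And>i. i \<in> A \<Longrightarrow> fin (g i)) \<Longrightarrow> fin (\<Sum>i\<in>A. g i :: 'x \<Rightarrow> 'k::field)"
  by (induction A rule: infinite_finite_induct) (auto intro: fin_add)

lemma fin_lin_ext: "(\<And>x. x \<in> fsupp f \<Longrightarrow> fin (g x)) \<Longrightarrow> fin (lin_ext fsc g (f :: 'y \<Rightarrow> 'k::field) :: 'x \<Rightarrow> 'k)"
  unfolding lin_ext_def by (intro fin_sum fin_fsc) auto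

lemma lin_ext_superset:
  assumes "finite S" "fsupp f \<subseteq> S" "\<And>y. sc 0 y = 0"
  shows "lin_ext sc g f = (\<Sum>x\<in>S. sc (f x) (g x))"
  unfolding lin_ext_def
  by (rule sum.mono_neutral_left) (use assms in \<open>auto simp: fsupp_def\<close>)

lemma fsc0[simp]: "fsc 0 (f :: 'x \<Rightarrow> 'k::field) = 0" by (simp add: fsc_def fun_eq_iff)
lemma fsc_zero[simp]: "fsc (c::'k::field) (0 :: 'x \<Rightarrow> 'k) = 0" by (simp add: fsc_def fun_eq_iff)
lemma fsc1[simp]: "fsc 1 (f :: 'x \<Rightarrow> 'k::field) = f" by (simp add: fsc_def fun_eq_iff)

lemma lin_ext_add:
  assumes "fin f" "fin g"
  shows "lin_ext fsc h (f + g) = lin_ext fsc h f + lin_ext fsc h (g :: 'y \<Rightarrow> 'k::field)"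
proof -
  let ?S = "fsupp f \<union> fsupp g"
  have "fsupp (f + g) \<subseteq> ?S" by (auto simp: fsupp_def)
  then have "lin_ext fsc h (f + g) = (\<Sum>x\<in>?S. fsc ((f+g) x) (h x))"
    using assms by (intro lin_ext_superset) auto
  also have "\<dots> = (\<Sum>x\<in>?S. fsc (f x) (h x)) + (\<Sum>x\<in>?S. fsc (g x) (h x))"
    by (simp add: fs.scale_left_distrib sum.distrib)
  also have "\<dots> = lin_ext fsc h f + lin_ext fsc h g"
    using assms by (subst (1 2) lin_ext_superset[where S="?S"]) auto
  finally show ?thesis .
qed

lemma lin_ext_fsc:
  shows "lin_ext fsc h (fsc c f) = fsc c (lin_ext fsc h (f :: 'y \<Rightarrow> 'k::field))"
proof (cases "c = 0")
  case True
  have "fsc c f = 0" using True by simp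
  then show ?thesis using True by (simp add: lin_ext_def fsupp_def)
next
  case False
  then have "fsupp (fsc c f) = fsupp f" by (auto simp: fsupp_def fsc_def)
  then show ?thesis
    by (simp add: lin_ext_def fs.scale_sum_right fsc_apply)
qed

lemma lin_ext_zero[simp]: "lin_ext sc h 0 = 0"
  by (simp add: lin_ext_def fsupp_def)

lemma lin_ext_fsingle[simp]: "lin_ext fsc h (fsingle z :: 'y \<Rightarrow> 'k::field) = h z"
  unfolding lin_ext_def fsupp_fsingle by (simp add: fsingle_def)


lemma lin_ext_cong:
  "(\<And>x. x \<in> fsupp f \<Longrightarrow> g x = g' x) \<Longrightarrow> lin_ext sc g f = lin_ext sc g' f"
  unfolding lin_ext_def by (rule sum.cong) auto

lemma lin_ext_diff_fun:
  "lin_ext fsc (\<lambda>x. g x - g' x) f = lin_ext fsc g (f :: 'y \<Rightarrow> 'k::field) - lin_ext fsc g' f"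
  unfolding lin_ext_def by (simp add: fs.scale_right_diff_distrib sum_subtractf)

lemma lin_ext_add_fun:
  "lin_ext fsc (\<lambda>x. g x + g' x) f = lin_ext fsc g (f :: 'y \<Rightarrow> 'k::field) + lin_ext fsc g' f"
  unfolding lin_ext_def by (simp add: fs.scale_right_distrib sum.distrib)

lemma lin_ext_fsc_fun:
  "lin_ext fsc (\<lambda>x. fsc c (g x)) f = fsc c (lin_ext fsc g (f :: 'y \<Rightarrow> 'k::field))"
  unfolding lin_ext_def by (simp add: fs.scale_sum_right mult.commute)

lemma lin_ext_subspace:
  assumes "fs.subspace S" "\<And>x. x \<in> fsupp f \<Longrightarrow> g x \<in> S"
  shows "lin_ext fsc g (f :: 'y \<Rightarrow> 'k::field) \<in> S"
  unfolding lin_ext_def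
  using assms by (intro fs.subspace_sum fs.subspace_scale) auto

definition lin :: "(('x \<Rightarrow> 'k::field) \<Rightarrow> ('y \<Rightarrow> 'k)) \<Rightarrow> bool" where
  "lin T \<longleftrightarrow> (\<forall>f g. fin f \<longrightarrow> fin g \<longrightarrow> T (f + g) = T f + T g)
     \<and> (\<forall>c f. fin f \<longrightarrow> T (fsc c f) = fsc c (T f)) \<and> (\<forall>f. fin f \<longrightarrow> fin (T f))"

lemma lin_lin_ext: "(\<And>x. fin (g x)) \<Longrightarrow> lin (lin_ext fsc g)"
  unfolding lin_def by (auto simp: lin_ext_add lin_ext_fsc intro: fin_lin_ext)

lemma linD: assumes "lin T"
  shows "fin f \<Longrightarrow> fin g \<Longrightarrow> T (f + g) = T f + T g"
    "fin f \<Longrightarrow> T (fsc c f) = fsc c (T f)" "fin f \<Longrightarrow> fin (T f)"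
  using assms unfolding lin_def by auto

lemma lin_zero: "lin T \<Longrightarrow> T 0 = 0"
  using linD(2)[of T 0 0] by simp

lemma lin_neg: "lin T \<Longrightarrow> fin f \<Longrightarrow> T (- f) = - T f"
proof -
  assume "lin T" "fin f"
  have "- f = fsc (-1) f" by (simp add: fsc_def fun_eq_iff)
  moreover have "fsc (-1) (T f) = - T f" by (simp add: fsc_def fun_eq_iff)
  ultimately show ?thesis using linD(2)[OF \<open>lin T\<close> \<open>fin f\<close>, of "-1"] by simp
qed

lemma lin_diff: "lin T \<Longrightarrow> fin f \<Longrightarrow> fin g \<Longrightarrow> T (f - g) = T f - T g"
  using linD(1)[of T f "- g"] lin_neg[of T g] fin_uminus[of g] by simp

lemma lin_sum: "lin T \<Longrightarrow> (\<And>i. i \<in> A \<Longrightarrow> fin (g i)) \<Longrightarrow> T (\<Sum>i\<in>A. g i) = (\<Sum>i\<in>A. T (g i))"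
proof (induction A rule: infinite_finite_induct)
  case (insert x F)
  have "T (\<Sum>i\<in>insert x F. g i) = T (g x + (\<Sum>i\<in>F. g i))"
    using insert by (simp add: sum.insert)
  also have "\<dots> = T (g x) + T (\<Sum>i\<in>F. g i)"
    using insert by (intro linD(1)) (auto intro: fin_sum)
  also have "\<dots> = (\<Sum>i\<in>insert x F. T (g i))"
  proof -
    have ih: "T (\<Sum>i\<in>F. g i) = (\<Sum>i\<in>F. T (g i))" using insert by blast
    show ?thesis using ih by (simp only: sum.insert[OF insert(1,2)])
  qed
  finally show ?case .
qed (auto simp: lin_zero)

lemma lin_comp: "lin T \<Longrightarrow> lin U \<Longrightarrow> lin (\<lambda>f. T (U f))"
  unfolding lin_def by auto

lemma lin_add_op: "lin T \<Longrightarrow> lin U \<Longrightarrow> lin (\<lambda>f. T f + U f)"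
  unfolding lin_def by (auto simp: fs.scale_right_distrib intro: fin_add)

lemma lin_diff_op: "lin T \<Longrightarrow> lin U \<Longrightarrow> lin (\<lambda>f. T f - U f)"
  unfolding lin_def by (auto simp: fs.scale_right_diff_distrib intro: fin_diff)

lemma lin_fsc_op: "lin T \<Longrightarrow> lin (\<lambda>f. fsc c (T f))"
  unfolding lin_def by (auto simp: fs.scale_right_distrib mult.commute intro: fin_fsc)

lemma lin_sum_op: "(\<And>i. i \<in> A \<Longrightarrow> lin (T i)) \<Longrightarrow> lin (\<lambda>f. \<Sum>i\<in>A. T i f)"
proof (induction A rule: infinite_finite_induct)
  case (infinite A)
  then show ?case unfolding lin_def by (simp add: fsupp_def fsc_def zero_fun_def)
next
  case empty
  then show ?case unfolding lin_def by (simp add: fsupp_def fsc_def zero_fun_def)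
next
  case (insert x F)
  have "lin (\<lambda>f. T x f + (\<Sum>i\<in>F. T i f))"
    by (rule lin_add_op) (use insert in auto)
  then show ?case by (simp only: sum.insert[OF insert(1,2)])
qed

lemma sum_fun_apply: "(\<Sum>i\<in>A. g i) x = (\<Sum>i\<in>A. (g i :: 'x \<Rightarrow> 'k::comm_monoid_add) x)"
  by (induction A rule: infinite_finite_induct) auto

lemma fsingle_decomp:
  assumes "fin f"
  shows "f = (\<Sum>x\<in>fsupp f. fsc (f x) (fsingle x :: 'x \<Rightarrow> 'k::field))"
proof
  fix y
  have "(\<Sum>x\<in>fsupp f. fsc (f x) (fsingle x :: 'x \<Rightarrow> 'k)) y = (\<Sum>x\<in>fsupp f. f x * fsingle x y)"
    by (simp add: sum_fun_apply fsc_def)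
  also have "\<dots> = (\<Sum>x\<in>fsupp f. if y = x then f x else 0)"
    by (rule sum.cong) (auto simp: fsingle_def)
  also have "\<dots> = (if y \<in> fsupp f then f y else 0)"
    by (rule sum.delta'[OF assms])
  also have "\<dots> = f y" by (auto simp: fsupp_def)
  finally show "f y = (\<Sum>x\<in>fsupp f. fsc (f x) (fsingle x :: 'x \<Rightarrow> 'k)) y" by simp
qed

lemma lin_decomp:
  assumes "lin T" "fin f"
  shows "T f = lin_ext fsc (\<lambda>x. T (fsingle x)) f"
proof -
  have "T f = T (\<Sum>x\<in>fsupp f. fsc (f x) (fsingle x))"
    using fsingle_decomp[OF assms(2)] by simp
  also have "\<dots> = (\<Sum>x\<in>fsupp f. fsc (f x) (T (fsingle x)))"
    using assms by (simp add: lin_sum fin_fsc linD(2))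
  finally show ?thesis by (simp add: lin_ext_def)
qed

lemma lin_ext_comp:
  assumes "lin T" "\<And>x. fin (g x)" "fin f"
  shows "T (lin_ext fsc g f) = lin_ext fsc (\<lambda>x. T (g x)) f"
proof -
  have "T (lin_ext fsc g f) = (\<Sum>x\<in>fsupp f. T (fsc (f x) (g x)))"
    unfolding lin_ext_def using assms by (simp add: lin_sum fin_fsc)
  then show ?thesis using assms by (simp add: lin_ext_def linD(2))
qed

lemma lin_in_subspace:
  assumes "lin T" "fin f" "fs.subspace S" "\<And>x. x \<in> fsupp f \<Longrightarrow> T (fsingle x) \<in> S"
  shows "T f \<in> S"
  using lin_decomp[OF assms(1,2)] lin_ext_subspace[OF assms(3)] assms(4) by metis

lemma lin_span_map:
  assumes "lin T" "fs.subspace S" "\<And>g. g \<in> G \<Longrightarrow> fin g \<and> T g \<in> S" "x \<in> fs.span G"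
  shows "fin x \<and> T x \<in> S"
  using assms(4)
proof (induction rule: fs.span_induct_alt)
  case base
  have "T 0 = 0" by (rule lin_zero[OF assms(1)])
  then show ?case using fs.subspace_0[OF assms(2)] fin_zero by metis
next
  case (step c x y)
  have fx: "fin x" "T x \<in> S" using assms(3) step(1) by auto
  have f1: "fin (fsc c x + y)" using fx step by (intro fin_add fin_fsc) auto
  have "T (fsc c x + y) = fsc c (T x) + T y"
    using fx step linD[OF assms(1)] fin_fsc by metis
  then have "T (fsc c x + y) \<in> S"
    using fx step fs.subspace_add[OF assms(2)] fs.subspace_scale[OF assms(2)] by metis
  then show ?case using f1 by blast
qed

lemma lin_ext_swap:
  "lin_ext fsc (\<lambda>x. lin_ext fsc (\<lambda>y. h x y) g) f
   = lin_ext fsc (\<lambda>y. lin_ext fsc (\<lambda>x. h x y) (f :: 'a \<Rightarrow> 'k::field)) (g :: 'b \<Rightarrow> 'k) "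
  unfolding lin_ext_def
  by (simp add: fs.scale_sum_right mult.commute sum.swap[of _ "fsupp f"])

definition addm :: "('k::field \<Rightarrow> 'y::ab_group_add \<Rightarrow> 'y) \<Rightarrow> ('y \<Rightarrow> ('x \<Rightarrow> 'k)) \<Rightarrow> ('x \<Rightarrow> 'k) set \<Rightarrow> bool" where
  "addm sc \<phi> S \<longleftrightarrow> (\<forall>x y. \<phi> (x + y) - \<phi> x - \<phi> y \<in> S) \<and> (\<forall>c x. \<phi> (sc c x) - fsc c (\<phi> x) \<in> S)"

lemma addmI:
  "(\<And>x y. \<phi> (x + y) - \<phi> x - \<phi> y \<in> S) \<Longrightarrow> (\<And>c x. \<phi> (sc c x) - fsc c (\<phi> x) \<in> S) \<Longrightarrow> addm sc \<phi> S"
  by (simp add: addm_def)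

lemma addm_comp:
  assumes "addm sc2 \<phi> S" "\<And>x y. h (x + y) = h x + h y" "\<And>c x. h (sc1 c x) = sc2 c (h x)"
  shows "addm sc1 (\<lambda>x. \<phi> (h x)) S"
  using assms unfolding addm_def by simp

lemma addm_lin_ext:
  assumes "addm sc \<phi> S" "fs.subspace S"
  shows "\<phi> (lin_ext sc h f) - lin_ext fsc (\<lambda>x. \<phi> (h x)) f \<in> S"
proof -
  have z: "\<phi> 0 \<in> S"
  proof -
    have "\<phi> (0 + 0) - \<phi> 0 - \<phi> 0 \<in> S" using assms(1) unfolding addm_def by blast
    then have "- \<phi> 0 \<in> S" by simp
    then have "- (- \<phi> 0) \<in> S" using fs.subspace_neg[OF assms(2)] by blast
    then show ?thesis by simp
  qed
  have "\<phi> (\<Sum>x\<in>A. sc (f x) (h x)) - (\<Sum>x\<in>A. fsc (f x) (\<phi> (h x))) \<in> S" for A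
  proof (induction A rule: infinite_finite_induct)
    case (insert x F)
    let ?a = "sc (f x) (h x)" and ?b = "\<Sum>x\<in>F. sc (f x) (h x)"
    have e: "\<phi> (?a + ?b) - (fsc (f x) (\<phi> (h x)) + (\<Sum>x\<in>F. fsc (f x) (\<phi> (h x))))
      = (\<phi> (?a + ?b) - \<phi> ?a - \<phi> ?b) + (\<phi> ?a - fsc (f x) (\<phi> (h x)))
        + (\<phi> ?b - (\<Sum>x\<in>F. fsc (f x) (\<phi> (h x))))" by simp
    have a1: "\<phi> (?a + ?b) - \<phi> ?a - \<phi> ?b \<in> S" "\<phi> ?a - fsc (f x) (\<phi> (h x)) \<in> S"
      using assms(1) unfolding addm_def by blast+
    show ?case
      by (simp only: sum.insert[OF insert(1,2)] e) (intro fs.subspace_add[OF assms(2)] a1 insert(3))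
  qed (use z in auto)
  then show ?thesis by (simp add: lin_ext_def)
qed

lemma addm_family:
  assumes "\<And>y. y \<in> fsupp t \<Longrightarrow> addm sc (\<lambda>z. \<phi> y z) S" "fs.subspace S"
  shows "addm sc (\<lambda>z. lin_ext fsc (\<lambda>y. \<phi> y z) (t :: 'u \<Rightarrow> 'k::field)) S"
proof (rule addmI)
  fix x1 x2
  have "lin_ext fsc (\<lambda>y. \<phi> y (x1 + x2)) t - lin_ext fsc (\<lambda>y. \<phi> y x1) t - lin_ext fsc (\<lambda>y. \<phi> y x2) t
     = lin_ext fsc (\<lambda>y. \<phi> y (x1 + x2) - \<phi> y x1 - \<phi> y x2) t"
    by (simp add: lin_ext_diff_fun)
  also have "\<dots> \<in> S" using assms by (intro lin_ext_subspace) (auto simp: addm_def)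
  finally show "lin_ext fsc (\<lambda>y. \<phi> y (x1 + x2)) t - lin_ext fsc (\<lambda>y. \<phi> y x1) t - lin_ext fsc (\<lambda>y. \<phi> y x2) t \<in> S" .
next
  fix c x
  have "lin_ext fsc (\<lambda>y. \<phi> y (sc c x)) t - fsc c (lin_ext fsc (\<lambda>y. \<phi> y x) t)
     = lin_ext fsc (\<lambda>y. \<phi> y (sc c x) - fsc c (\<phi> y x)) t"
    by (simp add: lin_ext_diff_fun lin_ext_fsc_fun)
  also have "\<dots> \<in> S" using assms by (intro lin_ext_subspace) (auto simp: addm_def)
  finally show "lin_ext fsc (\<lambda>y. \<phi> y (sc c x)) t - fsc c (lin_ext fsc (\<lambda>y. \<phi> y x) t) \<in> S" .
qed


lemma fin_tens_rep: "t \<in> tens_rep n \<Longrightarrow> fin t"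
  by (simp add: tens_rep_def)

lemma len_tens_rep: "t \<in> tens_rep n \<Longrightarrow> xs \<in> fsupp t \<Longrightarrow> length xs = n"
  by (simp add: tens_rep_def)

lemma subspace_tens_rep: "fs.subspace (tens_rep n :: ('x list \<Rightarrow> 'k::field) set)"
  unfolding fs.subspace_def tens_rep_def
proof (intro conjI ballI allI; clarsimp)
  fix x y :: "'x list \<Rightarrow> 'k"
  assume "finite (fsupp x)" "\<forall>xs\<in>fsupp x. length xs = n" "finite (fsupp y)" "\<forall>xs\<in>fsupp y. length xs = n"
  moreover have "fsupp (x + y) \<subseteq> fsupp x \<union> fsupp y" by (auto simp: fsupp_def)
  ultimately show "finite (fsupp (x + y)) \<and> (\<forall>xs\<in>fsupp (x + y). length xs = n)"
    using fin_add[of x y] by blast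
next
  fix c and x :: "'x list \<Rightarrow> 'k"
  assume "finite (fsupp x)" "\<forall>xs\<in>fsupp x. length xs = n"
  then show "finite (fsupp (fsc c x)) \<and> (\<forall>xs\<in>fsupp (fsc c x). length xs = n)"
    by (auto intro: fin_fsc simp: fsupp_def fsc_apply)
qed (simp add: fsupp_def)

lemma fsingle_tens_rep: "length xs = n \<Longrightarrow> (fsingle xs :: 'x list \<Rightarrow> 'k::field) \<in> tens_rep n"
  by (simp add: tens_rep_def)

lemma subspace_tens_rel: "fs.subspace (tens_rel sc n)"
  unfolding tens_rel_def by (rule fs.subspace_span)

lemma TR_map:
  fixes T :: "('x::ab_group_add list \<Rightarrow> 'k::field) \<Rightarrow> ('y \<Rightarrow> 'k)"
  assumes "lin T" "fs.subspace S"
    "\<And>xs i. length xs = n \<Longrightarrow> i < n \<Longrightarrow> addm sc (\<lambda>z. T (fsingle (xs[i:=z]))) S"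
    "t \<in> tens_rel sc n"
  shows "T t \<in> S"
proof -
  have "fin g \<and> T g \<in> S" if g: "g \<in> list_rel_gen sc n" for g
  proof -
    from g consider
      (a) xs i x y where "length xs = n" "i < n"
        "g = fsingle (xs[i := x + y]) - fsingle (xs[i := x]) - fsingle (xs[i := y])"
    | (b) xs i c x where "length xs = n" "i < n"
        "g = fsingle (xs[i := sc c x]) - fsc c (fsingle (xs[i := x]))"
      unfolding list_rel_gen_def by blast
    then show ?thesis
    proof cases
      case a
      have "fin g" using a by (auto intro!: fin_diff)
      moreover have "T g = T (fsingle (xs[i := x + y])) - T (fsingle (xs[i := x])) - T (fsingle (xs[i := y]))"
        using a lin_diff[OF assms(1)] by (simp add: fin_diff)
      moreover have "\<dots> \<in> S" using assms(3)[OF a(1,2)] unfolding addm_def by blast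
      ultimately show ?thesis by simp
    next
      case b
      have "fin g" using b by (auto intro!: fin_diff fin_fsc)
      moreover have "T g = T (fsingle (xs[i := sc c x])) - fsc c (T (fsingle (xs[i := x])))"
        using b lin_diff[OF assms(1)] linD(2)[OF assms(1)] by (simp add: fin_fsc)
      moreover have "\<dots> \<in> S" using assms(3)[OF b(1,2)] unfolding addm_def by blast
      ultimately show ?thesis by simp
    qed
  qed
  then show ?thesis using lin_span_map[OF assms(1,2)] assms(4) unfolding tens_rel_def by blast
qed

lemma lin_id: "lin (\<lambda>f. f)" by (simp add: lin_def)

lemma fin_tens_rel: "t \<in> tens_rel sc n \<Longrightarrow> fin (t :: 'x::ab_group_add list \<Rightarrow> 'k::field)"
proof -
  assume t: "t \<in> tens_rel sc n"
  have "fin g" if "g \<in> list_rel_gen sc n" for g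
    using that unfolding list_rel_gen_def by (auto intro!: fin_diff fin_fsc)
  then show ?thesis
    using lin_span_map[OF lin_id fs.subspace_UNIV, of "list_rel_gen sc n" t] t
    unfolding tens_rel_def by blast
qed

lemma slot_addm_T:
  assumes "length xs = n" "i < n"
  shows "addm sc (\<lambda>z. fsingle (xs[i:=z])) (tens_rel sc n)"
proof (rule addmI)
  fix x y
  have "fsingle (xs[i:=x+y]) - fsingle (xs[i:=x]) - fsingle (xs[i:=y]) \<in> list_rel_gen sc n"
    unfolding list_rel_gen_def using assms by blast
  then show "fsingle (xs[i:=x+y]) - fsingle (xs[i:=x]) - fsingle (xs[i:=y]) \<in> tens_rel sc n"
    unfolding tens_rel_def by (rule fs.span_base)
next
  fix c x
  have "fsingle (xs[i:=sc c x]) - fsc c (fsingle (xs[i:=x])) \<in> list_rel_gen sc n"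
    unfolding list_rel_gen_def using assms by blast
  then show "fsingle (xs[i:=sc c x]) - fsc c (fsingle (xs[i:=x])) \<in> tens_rel sc n"
    unfolding tens_rel_def by (rule fs.span_base)
qed

definition Ctx :: "'x list \<Rightarrow> 'x list \<Rightarrow> ('x list \<Rightarrow> 'k::field) \<Rightarrow> ('x list \<Rightarrow> 'k)" where
  "Ctx pre post t = lin_ext fsc (\<lambda>ys. fsingle (pre @ ys @ post)) t"

lemma lin_Ctx: "lin (Ctx pre post)"
  unfolding Ctx_def[abs_def] by (rule lin_lin_ext) simp

lemma Ctx_fsingle[simp]: "Ctx pre post (fsingle ys) = fsingle (pre @ ys @ post)"
  by (simp add: Ctx_def)

lemma Ctx_TR:
  assumes "t \<in> tens_rel sc k" "m = length pre + k + length post"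
  shows "Ctx pre post t \<in> tens_rel sc m"
proof (rule TR_map[OF lin_Ctx subspace_tens_rel _ assms(1)])
  fix xs :: "'a list" and i assume "length xs = k" "i < k"
  then have "addm sc (\<lambda>z. fsingle ((pre @ xs @ post)[length pre + i := z])) (tens_rel sc m)"
    using assms by (intro slot_addm_T) auto
  moreover have "(pre @ xs @ post)[length pre + i := z] = pre @ xs[i := z] @ post" for z
    using \<open>i < k\<close> \<open>length xs = k\<close> by (simp add: list_update_append)
  ultimately show "addm sc (\<lambda>z. Ctx pre post (fsingle (xs[i := z]))) (tens_rel sc m)"
    by simp
qed

lemma Ctx_rep:
  assumes "t \<in> tens_rep k" "m = length pre + k + length post"
  shows "Ctx pre post t \<in> tens_rep m"
  unfolding Ctx_def using assms
  by (intro lin_ext_subspace subspace_tens_rep fsingle_tens_rep) (auto dest: len_tens_rep)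

lemma Ctx_Ctx:
  assumes "fin t"
  shows "Ctx p1 q1 (Ctx p2 q2 t) = Ctx (p1 @ p2) (q2 @ q1) t"
  unfolding Ctx_def[of p2 q2] using assms
  by (simp add: lin_ext_comp[OF lin_Ctx] Ctx_def[of "p1@p2"])

lemma fsingle_self: "fsingle z z = (1::'k::field)" by (simp add: fsingle_def)

lemma tcat_single_right: "tcat f (fsingle ys) = Ctx [] ys f"
  unfolding tcat_def Ctx_def lin_ext_def fsupp_fsingle by (simp add: fsingle_self)

lemma tcat_single_left: "tcat (fsingle xs) g = Ctx xs [] g"
  unfolding tcat_def Ctx_def lin_ext_def fsupp_fsingle by (simp add: fsingle_self)


locale hsetting =
  fixes sB :: "'k::field \<Rightarrow> 'b::ring_1 \<Rightarrow> 'b"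
    and Delta :: "'b \<Rightarrow> 'b list \<Rightarrow> 'k"
    and eps :: "'b \<Rightarrow> 'k"
    and sA :: "'k \<Rightarrow> 'a::ring \<Rightarrow> 'a"
    and actA :: "'b \<Rightarrow> 'a \<Rightarrow> 'a"
    and sV :: "'k \<Rightarrow> 'v::ab_group_add \<Rightarrow> 'v"
    and lA :: "'a \<Rightarrow> 'v \<Rightarrow> 'v"
    and rA :: "'v \<Rightarrow> 'a \<Rightarrow> 'v"
    and actV :: "'b \<Rightarrow> 'v \<Rightarrow> 'v"
  assumes bialg: "bialgebra sB Delta eps"
    and modalg: "module_algebra sB Delta sA actA"
    and eqbim: "equivariant_bimodule sB Delta sA actA sV lA rA actV"
begin

lemma Delta_rep: "Delta b \<in> tens_rep 2"
  using bialg by (simp add: bialgebra_def)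
lemma Delta_fin: "fin (Delta b)"
  using Delta_rep by (rule fin_tens_rep)
lemma Delta_len: "ys \<in> fsupp (Delta b) \<Longrightarrow> length ys = 2"
  using Delta_rep by (rule len_tens_rep)
lemma Delta_add: "Delta (b + b') - (Delta b + Delta b') \<in> tens_rel sB 2"
  using bialg by (simp add: bialgebra_def)
lemma Delta_sc: "Delta (sB c b) - fsc c (Delta b) \<in> tens_rel sB 2"
  using bialg by (simp add: bialgebra_def)
lemma coassoc: "lin_ext fsc (\<lambda>xs. tcat (Delta (xs!0)) (fsingle [xs!1])) (Delta b)
          - lin_ext fsc (\<lambda>xs. tcat (fsingle [xs!0]) (Delta (xs!1))) (Delta b) \<in> tens_rel sB 3"
  using bialg by (simp add: bialgebra_def)
lemma Delta_mult: "Delta (b * b') - tmul (Delta b) (Delta b') \<in> tens_rel sB 2"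
  using bialg by (simp add: bialgebra_def)
lemma kB: "sB c (x * y) = sB c x * y" "sB c (x * y) = x * sB c y"
  using bialg unfolding bialgebra_def k_algebra_def by blast+
lemma kA: "sA c (x * y) = sA c x * y" "sA c (x * y) = x * sA c y"
  using modalg unfolding module_algebra_def k_algebra_def by blast+
lemma actA_lm: "actA (b + b') m = actA b m + actA b' m" "actA (sB c b) m = sA c (actA b m)"
  "actA b (m + m') = actA b m + actA b m'" "actA b (sA c m) = sA c (actA b m)"
  "actA (b * b') m = actA b (actA b' m)"
  using modalg by (simp_all add: module_algebra_def left_module_def)
lemma actA_mult: "actA b (a1 * a2) = lin_ext sA (\<lambda>xs. actA (xs!0) a1 * actA (xs!1) a2) (Delta b)"
  using modalg by (simp add: module_algebra_def)
lemma actV_lm: "actV (b + b') m = actV b m + actV b' m" "actV (sB c b) m = sV c (actV b m)"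
  "actV b (m + m') = actV b m + actV b m'" "actV b (sV c m) = sV c (actV b m)"
  "actV (b * b') m = actV b (actV b' m)"
  using eqbim by (simp_all add: equivariant_bimodule_def left_module_def)
lemma bim: "lA (a + a') v = lA a v + lA a' v"
     "lA a (v + v') = lA a v + lA a v'"
     "lA (sA c a) v = sV c (lA a v)"
     "lA a (sV c v) = sV c (lA a v)"
     "rA v (a + a') = rA v a + rA v a'"
     "rA (v + v') a = rA v a + rA v' a"
     "rA v (sA c a) = sV c (rA v a)"
     "rA (sV c v) a = sV c (rA v a)"
     "lA (a * a') v = lA a (lA a' v)"
     "rA v (a * a') = rA (rA v a) a'"
     "lA a (rA v a') = rA (lA a v) a'"
  using eqbim by (simp_all add: equivariant_bimodule_def bimodule_def)
lemma equiv_l: "actV b (lA a v) = lin_ext sV (\<lambda>xs. lA (actA (xs!0) a) (actV (xs!1) v)) (Delta b)"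
  using eqbim by (simp add: equivariant_bimodule_def)
lemma equiv_r: "actV b (rA v a) = lin_ext sV (\<lambda>xs. rA (actV (xs!0) v) (actA (xs!1) a)) (Delta b)"
  using eqbim by (simp add: equivariant_bimodule_def)

abbreviation TR where "TR n \<equiv> tens_rel sB n"

definition Phi :: "nat \<Rightarrow> ('b list \<Rightarrow> 'k) \<Rightarrow> ('b list \<Rightarrow> 'k)" where
  "Phi j t = lin_ext fsc (\<lambda>bs. Ctx (take j bs) (drop (Suc j) bs) (Delta (bs!j))) t"

lemma fin_Ctx: "fin t \<Longrightarrow> fin (Ctx p q t)"
  using linD(3)[OF lin_Ctx] .

lemma lin_Phi: "lin (Phi j)"
  unfolding Phi_def[abs_def] by (rule lin_lin_ext) (intro fin_Ctx Delta_fin)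

lemma Phi_fsingle: "Phi j (fsingle bs) = Ctx (take j bs) (drop (Suc j) bs) (Delta (bs!j))"
  by (simp add: Phi_def)

lemma Phi_rep:
  assumes "t \<in> tens_rep n" "j < n"
  shows "Phi j t \<in> tens_rep (Suc n)"
  unfolding Phi_def using assms
  by (intro lin_ext_subspace subspace_tens_rep Ctx_rep[OF Delta_rep]) (auto dest: len_tens_rep)

lemma list_aux1:
  assumes "length xs = n" "i < n" "j < n" "i \<noteq> j" "length ys = 2"
  shows "take j (xs[i:=z]) @ ys @ drop (Suc j) (xs[i:=z])
       = (take j xs @ ys @ drop (Suc j) xs)[(if i < j then i else Suc i) := z]"
  using assms
  by (auto simp: list_update_append take_update_swap drop_update_swap min_def nth_append
      intro!: nth_equalityI)

lemma Phi_TR: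
  assumes "t \<in> TR n" "j < n"
  shows "Phi j t \<in> TR (Suc n)"
proof (rule TR_map[OF lin_Phi subspace_tens_rel _ assms(1)])
  fix xs :: "'b list" and i assume xs: "length xs = n" "i < n"
  show "addm sB (\<lambda>z. Phi j (fsingle (xs[i := z]))) (TR (Suc n))"
  proof (cases "i = j")
    case True
    have e: "Phi j (fsingle (xs[i := z])) = Ctx (take j xs) (drop (Suc j) xs) (Delta z)" for z
      using True xs by (simp add: Phi_fsingle)
    show ?thesis unfolding e
    proof (rule addmI)
      fix x y
      have "Ctx (take j xs) (drop (Suc j) xs) (Delta (x + y) - (Delta x + Delta y)) \<in> TR (Suc n)"
        by (rule Ctx_TR[OF Delta_add]) (use xs assms in auto)
      moreover have "Ctx (take j xs) (drop (Suc j) xs) (Delta (x + y) - (Delta x + Delta y)) =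
         Ctx (take j xs) (drop (Suc j) xs) (Delta (x + y)) - Ctx (take j xs) (drop (Suc j) xs) (Delta x) -
           Ctx (take j xs) (drop (Suc j) xs) (Delta y)"
        by (simp add: lin_diff[OF lin_Ctx] linD(1)[OF lin_Ctx] Delta_fin fin_add diff_diff_eq)
      ultimately show "Ctx (take j xs) (drop (Suc j) xs) (Delta (x + y)) - Ctx (take j xs) (drop (Suc j) xs) (Delta x) -
           Ctx (take j xs) (drop (Suc j) xs) (Delta y) \<in> TR (Suc n)"
        by simp
    next
      fix c x
      have "Ctx (take j xs) (drop (Suc j) xs) (Delta (sB c x) - fsc c (Delta x)) \<in> TR (Suc n)"
        by (rule Ctx_TR[OF Delta_sc]) (use xs assms in auto)
      then show "Ctx (take j xs) (drop (Suc j) xs) (Delta (sB c x)) - fsc c (Ctx (take j xs) (drop (Suc j) xs) (Delta x)) \<in> TR (Suc n)"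
        by (simp add: lin_diff[OF lin_Ctx] linD(2)[OF lin_Ctx] Delta_fin fin_fsc)
    qed
  next
    case False
    let ?i = "if i < j then i else Suc i"
    have e: "Phi j (fsingle (xs[i := z])) = lin_ext fsc (\<lambda>ys. fsingle ((take j xs @ ys @ drop (Suc j) xs)[?i := z])) (Delta (xs!j))" for z
    proof -
      have nj: "xs[i:=z]!j = xs!j" using False by simp
      show ?thesis
        unfolding Phi_fsingle Ctx_def nj
        by (intro lin_ext_cong) (use False xs assms in \<open>simp add: list_aux1 Delta_len\<close>)
    qed
    show ?thesis unfolding e
      by (intro addm_family subspace_tens_rel slot_addm_T) (use False xs assms in \<open>auto dest: Delta_len\<close>)
  qed
qed

lemma Phi_TR': "t \<in> TR n \<Longrightarrow> j < n \<Longrightarrow> m = Suc n \<Longrightarrow> Phi j t \<in> TR m"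
  using Phi_TR by blast

end


lemma lin_eq:
  assumes "lin T" "lin U" "fin f" "\<And>x. x \<in> fsupp f \<Longrightarrow> T (fsingle x) = U (fsingle x)"
  shows "T f = U f"
proof -
  have "T f = lin_ext fsc (\<lambda>x. T (fsingle x)) f" by (rule lin_decomp[OF assms(1,3)])
  also have "\<dots> = lin_ext fsc (\<lambda>x. U (fsingle x)) f" by (rule lin_ext_cong) (rule assms(4))
  also have "\<dots> = U f" by (rule lin_decomp[OF assms(2,3), symmetric])
  finally show ?thesis .
qed

declare iter_cop.simps(2)[simp del]

context hsetting
begin

abbreviation I where "I m b \<equiv> iter_cop Delta m b"

lemma I_Suc_aux:
  assumes "I m b \<in> tens_rep (Suc m)"
  shows "I (Suc m) b = Phi 0 (I m b)"
  unfolding iter_cop.simps Phi_def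
proof (rule lin_ext_cong)
  fix xs assume "xs \<in> fsupp (I m b)"
  then have "xs \<noteq> []" using len_tens_rep[OF assms] by fastforce
  then show "tcat (Delta (hd xs)) (fsingle (tl xs)) = Ctx (take 0 xs) (drop (Suc 0) xs) (Delta (xs ! 0))"
    by (simp add: tcat_single_right hd_conv_nth drop_Suc)
qed

lemma I_rep: "I m b \<in> tens_rep (Suc m)"
proof (induction m)
  case 0
  then show ?case by (simp add: fsingle_tens_rep)
next
  case (Suc m)
  then show ?case using I_Suc_aux[OF Suc] Phi_rep[OF Suc] by simp
qed

lemma I_Suc: "I (Suc m) b = Phi 0 (I m b)"
  by (rule I_Suc_aux[OF I_rep])

lemma I_fin: "fin (I m b)"
  using I_rep by (rule fin_tens_rep)

lemma I_len: "bs \<in> fsupp (I m b) \<Longrightarrow> length bs = Suc m"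
  using I_rep by (rule len_tens_rep)

lemma fin_Phi: "fin t \<Longrightarrow> fin (Phi j t)"
  using linD(3)[OF lin_Phi] .

lemma Phi0_fsingle: "Phi 0 (fsingle bs) = Ctx [] (tl bs) (Delta (bs!0))"
  by (simp add: Phi_fsingle drop_Suc)

lemma fin_tcat_l: "fin (tcat (fsingle xs) (Delta b))"
  by (simp add: tcat_single_left fin_Ctx Delta_fin)
lemma fin_tcat_r: "fin (tcat (Delta b) (fsingle xs))"
  by (simp add: tcat_single_right fin_Ctx Delta_fin)

lemma Phi10:
  assumes "length bs = Suc n"
  shows "Phi 1 (Phi 0 (fsingle bs)) - Phi 0 (Phi 0 (fsingle bs)) \<in> TR (Suc (Suc (Suc n)))"
proof -
  let ?D = "Delta (bs!0)" and ?q = "tl bs"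
  have A: "Phi 1 (Phi 0 (fsingle bs)) = Ctx [] ?q (lin_ext fsc (\<lambda>xs. tcat (fsingle [xs!0]) (Delta (xs!1))) ?D)"
  proof -
    have "Phi 1 (Phi 0 (fsingle bs)) = lin_ext fsc (\<lambda>ys. Phi 1 (fsingle (ys @ ?q))) ?D"
      unfolding Phi0_fsingle Ctx_def by (simp add: lin_ext_comp[OF lin_Phi] Delta_fin)
    also have "\<dots> = lin_ext fsc (\<lambda>ys. Ctx [] ?q (tcat (fsingle [ys!0]) (Delta (ys!1)))) ?D"
    proof (rule lin_ext_cong)
      fix ys assume "ys \<in> fsupp ?D"
      then have l: "length ys = 2" by (rule Delta_len)
      then obtain y0 y1 where "ys = [y0, y1]"
        by (metis (no_types, lifting) Suc_length_conv length_0_conv numeral_2_eq_2)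
      then show "Phi 1 (fsingle (ys @ ?q)) = Ctx [] ?q (tcat (fsingle [ys!0]) (Delta (ys!1)))"
        by (simp add: Phi_fsingle tcat_single_left Ctx_Ctx Delta_fin)
    qed
    also have "\<dots> = Ctx [] ?q (lin_ext fsc (\<lambda>xs. tcat (fsingle [xs!0]) (Delta (xs!1))) ?D)"
      by (rule lin_ext_comp[OF lin_Ctx, symmetric]) (simp_all add: fin_tcat_l Delta_fin)
    finally show ?thesis .
  qed
  have B: "Phi 0 (Phi 0 (fsingle bs)) = Ctx [] ?q (lin_ext fsc (\<lambda>xs. tcat (Delta (xs!0)) (fsingle [xs!1])) ?D)"
  proof -
    have "Phi 0 (Phi 0 (fsingle bs)) = lin_ext fsc (\<lambda>ys. Phi 0 (fsingle (ys @ ?q))) ?D"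
      unfolding Phi0_fsingle[of bs] Ctx_def by (simp add: lin_ext_comp[OF lin_Phi] Delta_fin)
    also have "\<dots> = lin_ext fsc (\<lambda>ys. Ctx [] ?q (tcat (Delta (ys!0)) (fsingle [ys!1]))) ?D"
    proof (rule lin_ext_cong)
      fix ys assume "ys \<in> fsupp ?D"
      then have l: "length ys = 2" by (rule Delta_len)
      then obtain y0 y1 where "ys = [y0, y1]"
        by (metis (no_types, lifting) Suc_length_conv length_0_conv numeral_2_eq_2)
      then show "Phi 0 (fsingle (ys @ ?q)) = Ctx [] ?q (tcat (Delta (ys!0)) (fsingle [ys!1]))"
        by (simp add: Phi0_fsingle tcat_single_right Ctx_Ctx Delta_fin)
    qed
    also have "\<dots> = Ctx [] ?q (lin_ext fsc (\<lambda>xs. tcat (Delta (xs!0)) (fsingle [xs!1])) ?D)"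
      by (rule lin_ext_comp[OF lin_Ctx, symmetric]) (simp_all add: fin_tcat_r Delta_fin)
    finally show ?thesis .
  qed
  let ?L = "lin_ext fsc (\<lambda>xs. tcat (Delta (xs!0)) (fsingle [xs!1])) ?D"
  let ?R = "lin_ext fsc (\<lambda>xs. tcat (fsingle [xs!0]) (Delta (xs!1))) ?D"
  have fL: "fin ?L" by (intro fin_lin_ext fin_tcat_r)
  have fR: "fin ?R" by (intro fin_lin_ext fin_tcat_l)
  have "Ctx [] ?q (?L - ?R) \<in> TR (Suc (Suc (Suc n)))"
    by (rule Ctx_TR[OF coassoc]) (use assms in simp)
  then have "- Ctx [] ?q (?L - ?R) \<in> TR (Suc (Suc (Suc n)))"
    by (rule fs.subspace_neg[OF subspace_tens_rel])
  moreover have "- Ctx [] ?q (?L - ?R) = Ctx [] ?q ?R - Ctx [] ?q ?L"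
    using lin_diff[OF lin_Ctx fL fR] by simp
  ultimately show ?thesis using A B by simp
qed

lemma Phi_comm:
  assumes "length bs = n" "Suc j < n"
  shows "Phi (Suc (Suc j)) (Phi 0 (fsingle bs)) = Phi 0 (Phi (Suc j) (fsingle bs))"
proof -
  let ?pre = "take j (tl bs)" and ?post = "drop (Suc j) (tl bs)"
  have "Phi (Suc (Suc j)) (Phi 0 (fsingle bs)) = lin_ext fsc (\<lambda>ys. Phi (Suc (Suc j)) (fsingle (ys @ tl bs))) (Delta (bs!0))"
    unfolding Phi0_fsingle Ctx_def by (simp add: lin_ext_comp[OF lin_Phi] Delta_fin)
  also have "\<dots> = lin_ext fsc (\<lambda>ys. lin_ext fsc (\<lambda>zs. fsingle (ys @ ?pre @ zs @ ?post)) (Delta (bs!Suc j))) (Delta (bs!0))"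
  proof (rule lin_ext_cong)
    fix ys assume "ys \<in> fsupp (Delta (bs!0))"
    then have l: "length ys = 2" by (rule Delta_len)
    then obtain y0 y1 where "ys = [y0, y1]"
      by (metis (no_types, lifting) Suc_length_conv length_0_conv numeral_2_eq_2)
    moreover have "tl bs ! j = bs ! Suc j" using assms by (cases bs) auto
    ultimately show "Phi (Suc (Suc j)) (fsingle (ys @ tl bs)) = lin_ext fsc (\<lambda>zs. fsingle (ys @ ?pre @ zs @ ?post)) (Delta (bs!Suc j))"
      by (simp add: Phi_fsingle Ctx_def)
  qed
  also have "\<dots> = lin_ext fsc (\<lambda>zs. lin_ext fsc (\<lambda>ys. fsingle (ys @ ?pre @ zs @ ?post)) (Delta (bs!0))) (Delta (bs!Suc j))"
    by (rule lin_ext_swap)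
  also have "\<dots> = lin_ext fsc (\<lambda>zs. Phi 0 (fsingle (take (Suc j) bs @ zs @ drop (Suc (Suc j)) bs))) (Delta (bs!Suc j))"
  proof (rule lin_ext_cong)
    fix zs
    obtain b0 bs' where bs: "bs = b0 # bs'" using assms by (cases bs) auto
    show "lin_ext fsc (\<lambda>ys. fsingle (ys @ ?pre @ zs @ ?post)) (Delta (bs!0)) =
      Phi 0 (fsingle (take (Suc j) bs @ zs @ drop (Suc (Suc j)) bs))"
      by (simp add: bs Phi0_fsingle Ctx_def)
  qed
  also have "\<dots> = Phi 0 (Phi (Suc j) (fsingle bs))"
    unfolding Phi_fsingle[of "Suc j"] Ctx_def
    by (simp add: lin_ext_comp[OF lin_Phi] Delta_fin)
  finally show ?thesis .
qed

lemma gen_coassoc: "j \<le> m \<Longrightarrow> Phi j (I m b) - I (Suc m) b \<in> TR (Suc (Suc m))"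
proof (induction j arbitrary: m)
  case 0
  show ?case using fs.subspace_0[OF subspace_tens_rel] by (simp only: I_Suc diff_self)
next
  case (Suc j)
  then obtain m' where m: "m = Suc m'" by (cases m) auto
  have Im: "I m b = Phi 0 (I m' b)" by (simp add: m I_Suc)
  show ?case
  proof (cases j)
    case 0
    have "(\<lambda>t. Phi 1 (Phi 0 t) - Phi 0 (Phi 0 t)) (I m' b) \<in> TR (Suc (Suc m))"
      by (rule lin_in_subspace[OF lin_diff_op[OF lin_comp[OF lin_Phi lin_Phi] lin_comp[OF lin_Phi lin_Phi]]
            I_fin subspace_tens_rel])
        (use Phi10[OF I_len] in \<open>simp only: m\<close>)
    then show ?thesis by (simp only: 0 Im I_Suc One_nat_def)
  next
    case (Suc j')
    have eq: "Phi (Suc j) (Phi 0 (I m' b)) = Phi 0 (Phi j (I m' b))"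
      by (rule lin_eq[OF lin_comp[OF lin_Phi lin_Phi] lin_comp[OF lin_Phi lin_Phi] I_fin])
        (use Suc.prems m Suc in \<open>auto intro!: Phi_comm dest: I_len\<close>)
    have "Phi j (I m' b) - I (Suc m') b \<in> TR (Suc (Suc m'))"
      by (rule Suc.IH) (use Suc.prems m in simp)
    then have "Phi 0 (Phi j (I m' b) - I (Suc m') b) \<in> TR (Suc (Suc m))"
      by (rule Phi_TR') (simp_all add: m)
    moreover have "Phi 0 (Phi j (I m' b) - I (Suc m') b) = Phi 0 (Phi j (I m' b)) - Phi 0 (I (Suc m') b)"
      by (rule lin_diff[OF lin_Phi]) (simp_all add: fin_Phi I_fin)
    moreover have "Phi (Suc j) (I m b) - I (Suc m) b = Phi 0 (Phi j (I m' b)) - Phi 0 (I (Suc m') b)"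
      by (simp only: Im eq m I_Suc)
    ultimately show ?thesis by (simp only:)
  qed
qed

end


lemma tmul_alt: "tmul f g = lin_ext fsc (\<lambda>xs. lin_ext fsc (\<lambda>ys. fsingle (map2 (*) xs ys)) g) f"
  unfolding tmul_def lin_ext_def
  by (simp add: fs.scale_sum_right flip: fs.scale_scale)

lemma tmul_alt2: "tmul f g = lin_ext fsc (\<lambda>ys. lin_ext fsc (\<lambda>xs. fsingle (map2 (*) xs ys)) f) g"
  unfolding tmul_alt by (rule lin_ext_swap)

lemma lin_tmul1: "lin (\<lambda>f. tmul f g)"
  unfolding tmul_alt by (rule lin_lin_ext) (intro fin_lin_ext fin_fsingle)

lemma lin_tmul2: "lin (\<lambda>g. tmul f g)"
  unfolding tmul_alt2 by (rule lin_lin_ext) (intro fin_lin_ext fin_fsingle)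

lemma fin_tmul: "fin (tmul f g)"
  unfolding tmul_alt by (intro fin_lin_ext fin_fsingle)

lemma tmul_fsingle: "tmul (fsingle xs) (fsingle ys) = fsingle (map2 (*) xs ys)"
  by (simp add: tmul_alt)

lemma map2_append2:
  "length ws = length us \<Longrightarrow> map2 f (ws @ a) (us @ b) = map2 f ws us @ map2 f a b"
  by simp

context hsetting
begin

lemma tmul_Ctx:
  assumes "fin D1" "fin D2" "\<And>ws. ws \<in> fsupp D1 \<Longrightarrow> length ws = 2" "\<And>us. us \<in> fsupp D2 \<Longrightarrow> length us = 2"
  shows "tmul (Ctx [] a D1) (Ctx [] c D2) = Ctx [] (map2 (*) a c) (tmul D1 D2)"
proof -
  have "tmul (Ctx [] a D1) (Ctx [] c D2) = lin_ext fsc (\<lambda>ws. tmul (fsingle (ws @ a)) (Ctx [] c D2)) D1"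
    unfolding Ctx_def[of "[]" a] by (simp add: lin_ext_comp[OF lin_tmul1] assms)
  also have "\<dots> = lin_ext fsc (\<lambda>ws. lin_ext fsc (\<lambda>us. fsingle (map2 (*) (ws @ a) (us @ c))) D2) D1"
    unfolding Ctx_def[of "[]" c] by (simp add: lin_ext_comp[OF lin_tmul2] assms tmul_fsingle)
  also have "\<dots> = lin_ext fsc (\<lambda>ws. lin_ext fsc (\<lambda>us. fsingle (map2 (*) ws us @ map2 (*) a c)) D2) D1"
    using assms(3,4) by (intro lin_ext_cong) (simp add: map2_append2)
  also have "\<dots> = Ctx [] (map2 (*) a c) (tmul D1 D2)"
    unfolding tmul_alt
    by (simp add: lin_ext_comp[OF lin_Ctx] fin_lin_ext assms)
  finally show ?thesis .
qed

lemma Phi0_tmul_basis: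
  assumes "length xs = Suc n" "length ys = Suc n"
  shows "Phi 0 (tmul (fsingle xs) (fsingle ys)) - tmul (Phi 0 (fsingle xs)) (Phi 0 (fsingle ys)) \<in> TR (Suc (Suc n))"
proof -
  let ?q = "map2 (*) (tl xs) (tl ys)"
  have 1: "Phi 0 (tmul (fsingle xs) (fsingle ys)) = Ctx [] ?q (Delta (xs!0 * ys!0))"
  proof -
    obtain x0 xs' where "xs = x0 # xs'" using assms by (cases xs) auto
    moreover obtain y0 ys' where "ys = y0 # ys'" using assms by (cases ys) auto
    ultimately show ?thesis by (simp add: tmul_fsingle Phi0_fsingle)
  qed
  have 2: "tmul (Phi 0 (fsingle xs)) (Phi 0 (fsingle ys)) = Ctx [] ?q (tmul (Delta (xs!0)) (Delta (ys!0)))"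
    unfolding Phi0_fsingle by (rule tmul_Ctx) (auto simp: Delta_fin Delta_len)
  have "Ctx [] ?q (Delta (xs!0 * ys!0) - tmul (Delta (xs!0)) (Delta (ys!0))) \<in> TR (Suc (Suc n))"
    by (rule Ctx_TR[OF Delta_mult]) (use assms in simp)
  then show ?thesis
    unfolding 1 2 by (simp add: lin_diff[OF lin_Ctx] Delta_fin fin_tmul)
qed

lemma Phi0_tmul:
  assumes "f \<in> tens_rep (Suc n)" "g \<in> tens_rep (Suc n)"
  shows "Phi 0 (tmul f g) - tmul (Phi 0 f) (Phi 0 g) \<in> TR (Suc (Suc n))"
proof -
  have "(\<lambda>f. Phi 0 (tmul f g) - tmul (Phi 0 f) (Phi 0 g)) f \<in> TR (Suc (Suc n))"
  proof (rule lin_in_subspace[OF _ fin_tens_rep[OF assms(1)] subspace_tens_rel])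
    show "lin (\<lambda>f. Phi 0 (tmul f g) - tmul (Phi 0 f) (Phi 0 g))"
      by (intro lin_diff_op lin_comp[OF lin_Phi lin_tmul1] lin_comp[OF lin_tmul1 lin_Phi])
  next
    fix xs assume xs: "xs \<in> fsupp f"
    have "(\<lambda>g. Phi 0 (tmul (fsingle xs) g) - tmul (Phi 0 (fsingle xs)) (Phi 0 g)) g \<in> TR (Suc (Suc n))"
    proof (rule lin_in_subspace[OF _ fin_tens_rep[OF assms(2)] subspace_tens_rel])
      show "lin (\<lambda>g. Phi 0 (tmul (fsingle xs) g) - tmul (Phi 0 (fsingle xs)) (Phi 0 g))"
        by (intro lin_diff_op lin_comp[OF lin_Phi lin_tmul2] lin_comp[OF lin_tmul2 lin_Phi])
    next
      fix ys assume "ys \<in> fsupp g"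
      then show "Phi 0 (tmul (fsingle xs) (fsingle ys)) - tmul (Phi 0 (fsingle xs)) (Phi 0 (fsingle ys)) \<in> TR (Suc (Suc n))"
        using xs assms by (intro Phi0_tmul_basis) (auto dest: len_tens_rep)
    qed
    then show "Phi 0 (tmul (fsingle xs) g) - tmul (Phi 0 (fsingle xs)) (Phi 0 g) \<in> TR (Suc (Suc n))" by simp
  qed
  then show ?thesis by simp
qed

lemma I_mult: "I n (b * b') - tmul (I n b) (I n b') \<in> TR (Suc n)"
proof (induction n)
  case 0
  have "tmul (I 0 b) (I 0 b') = I 0 (b * b')" by (simp add: tmul_fsingle)
  then show ?case using fs.subspace_0[OF subspace_tens_rel] by (simp only: diff_self)
next
  case (Suc n)
  have a: "Phi 0 (I n (b * b') - tmul (I n b) (I n b')) \<in> TR (Suc (Suc n))"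
    by (rule Phi_TR[OF Suc.IH]) simp
  have b: "Phi 0 (tmul (I n b) (I n b')) - tmul (Phi 0 (I n b)) (Phi 0 (I n b')) \<in> TR (Suc (Suc n))"
    by (rule Phi0_tmul[OF I_rep I_rep])
  have "I (Suc n) (b * b') - tmul (I (Suc n) b) (I (Suc n) b') =
     Phi 0 (I n (b * b') - tmul (I n b) (I n b')) + (Phi 0 (tmul (I n b) (I n b')) - tmul (Phi 0 (I n b)) (Phi 0 (I n b')))"
    by (simp only: I_Suc lin_diff[OF lin_Phi I_fin fin_tmul]) simp
  then show ?case using fs.subspace_add[OF subspace_tens_rel a b] by (simp only:)
qed

end


lemma subspace_ch_rep: "fs.subspace (ch_rep n :: ('a list \<times> 'v \<Rightarrow> 'k::field) set)"
  unfolding fs.subspace_def ch_rep_def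
proof (intro conjI ballI allI; clarsimp)
  fix x y :: "'a list \<times> 'v \<Rightarrow> 'k"
  assume "finite (fsupp x)" "\<forall>p\<in>fsupp x. length (fst p) = n" "finite (fsupp y)" "\<forall>p\<in>fsupp y. length (fst p) = n"
  moreover have "fsupp (x + y) \<subseteq> fsupp x \<union> fsupp y" by (auto simp: fsupp_def)
  ultimately show "finite (fsupp (x + y)) \<and> (\<forall>p\<in>fsupp (x + y). length (fst p) = n)"
    using fin_add[of x y] by blast
next
  fix c and x :: "'a list \<times> 'v \<Rightarrow> 'k"
  assume "finite (fsupp x)" "\<forall>p\<in>fsupp x. length (fst p) = n"
  then show "finite (fsupp (fsc c x)) \<and> (\<forall>p\<in>fsupp (fsc c x). length (fst p) = n)"
    by (auto intro: fin_fsc simp: fsupp_def fsc_apply)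
qed (simp add: fsupp_def)

lemma fsingle_ch_rep: "length as = n \<Longrightarrow> (fsingle (as, v) :: 'a list \<times> 'v \<Rightarrow> 'k::field) \<in> ch_rep n"
  by (simp add: ch_rep_def)

lemma fin_ch_rep: "t \<in> ch_rep n \<Longrightarrow> fin t"
  by (simp add: ch_rep_def)

lemma len_ch_rep: "t \<in> ch_rep n \<Longrightarrow> p \<in> fsupp t \<Longrightarrow> length (fst p) = n"
  by (simp add: ch_rep_def)

lemma subspace_ch_rel: "fs.subspace (ch_rel sA sV n)"
  unfolding ch_rel_def by (rule fs.subspace_span)

lemma CR_map:
  fixes T :: "('a::ab_group_add list \<times> 'v::ab_group_add \<Rightarrow> 'k::field) \<Rightarrow> ('y \<Rightarrow> 'k)"
  assumes "lin T" "fs.subspace S"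
    "\<And>as i v. length as = n \<Longrightarrow> i < n \<Longrightarrow> addm sA (\<lambda>z. T (fsingle (as[i:=z], v))) S"
    "\<And>as. length as = n \<Longrightarrow> addm sV (\<lambda>w. T (fsingle (as, w))) S"
    "t \<in> ch_rel sA sV n"
  shows "T t \<in> S"
proof -
  have "fin g \<and> T g \<in> S" if g: "g \<in> ch_rel_gen sA sV n" for g
  proof -
    from g consider
      (a) as i x y v where "length as = n" "i < n"
        "g = fsingle (as[i := x + y], v) - fsingle (as[i := x], v) - fsingle (as[i := y], v)"
    | (b) as i c x v where "length as = n" "i < n"
        "g = fsingle (as[i := sA c x], v) - fsc c (fsingle (as[i := x], v))"
    | (c) as v w where "length as = n"
        "g = fsingle (as, v + w) - fsingle (as, v) - fsingle (as, w)"
    | (d) as c v where "length as = n"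
        "g = fsingle (as, sV c v) - fsc c (fsingle (as, v))"
    proof -
      assume h: "\<And>as i x y v. length as = n \<Longrightarrow> i < n \<Longrightarrow>
        g = fsingle (as[i := x + y], v) - fsingle (as[i := x], v) - fsingle (as[i := y], v) \<Longrightarrow> thesis"
        "\<And>as i c x v. length as = n \<Longrightarrow> i < n \<Longrightarrow>
        g = fsingle (as[i := sA c x], v) - fsc c (fsingle (as[i := x], v)) \<Longrightarrow> thesis"
        "\<And>as v w. length as = n \<Longrightarrow> g = fsingle (as, v + w) - fsingle (as, v) - fsingle (as, w) \<Longrightarrow> thesis"
        "\<And>as c v. length as = n \<Longrightarrow> g = fsingle (as, sV c v) - fsc c (fsingle (as, v)) \<Longrightarrow> thesis"
      from g[unfolded ch_rel_gen_def] show thesis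
        unfolding Un_iff mem_Collect_eq
        by (elim disjE exE conjE) (erule (2) h, erule (2) h, erule h, assumption, erule h, assumption)
    qed
    then show ?thesis
    proof cases
      case a
      have "fin g" using a by (auto intro!: fin_diff)
      moreover have "T g = T (fsingle (as[i := x + y], v)) - T (fsingle (as[i := x], v)) - T (fsingle (as[i := y], v))"
        using a lin_diff[OF assms(1)] by (simp add: fin_diff)
      moreover have "\<dots> \<in> S" using assms(3)[OF a(1,2)] unfolding addm_def by blast
      ultimately show ?thesis by simp
    next
      case b
      have "fin g" using b by (auto intro!: fin_diff fin_fsc)
      moreover have "T g = T (fsingle (as[i := sA c x], v)) - fsc c (T (fsingle (as[i := x], v)))"
        using b lin_diff[OF assms(1)] linD(2)[OF assms(1)] by (simp add: fin_fsc)
      moreover have "\<dots> \<in> S" using assms(3)[OF b(1,2)] unfolding addm_def by blast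
      ultimately show ?thesis by simp
    next
      case c
      have "fin g" using c by (auto intro!: fin_diff)
      moreover have "T g = T (fsingle (as, v + w)) - T (fsingle (as, v)) - T (fsingle (as, w))"
        using c lin_diff[OF assms(1)] by (simp add: fin_diff)
      moreover have "\<dots> \<in> S" using assms(4)[OF c(1)] unfolding addm_def by blast
      ultimately show ?thesis by simp
    next
      case d
      have "fin g" using d by (auto intro!: fin_diff fin_fsc)
      moreover have "T g = T (fsingle (as, sV c v)) - fsc c (T (fsingle (as, v)))"
        using d lin_diff[OF assms(1)] linD(2)[OF assms(1)] by (simp add: fin_fsc)
      moreover have "\<dots> \<in> S" using assms(4)[OF d(1)] unfolding addm_def by blast
      ultimately show ?thesis by simp
    qed
  qed
  then show ?thesis using lin_span_map[OF assms(1,2)] assms(5) unfolding ch_rel_def by blast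
qed

lemma slot_addm_A:
  assumes "length as = n" "i < n"
  shows "addm sA (\<lambda>z. fsingle (as[i:=z], v)) (ch_rel sA sV n)"
proof (rule addmI)
  fix x y
  have m: "fsingle (as[i:=x+y], v) - fsingle (as[i:=x], v) - fsingle (as[i:=y], v) \<in> {fsingle (as[i := x + y], v) - fsingle (as[i := x], v) - fsingle (as[i := y], v) | as i x y v.
        length as = n \<and> i < n}" unfolding mem_Collect_eq
    by (rule exI[of _ as], rule exI[of _ i], rule exI[of _ x], rule exI[of _ y], rule exI[of _ v]) (simp add: assms)
  have "fsingle (as[i:=x+y], v) - fsingle (as[i:=x], v) - fsingle (as[i:=y], v) \<in> ch_rel_gen sA sV n"
    unfolding ch_rel_gen_def by (rule UnI1[OF UnI1[OF UnI1[OF m]]])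
  then show "fsingle (as[i:=x+y], v) - fsingle (as[i:=x], v) - fsingle (as[i:=y], v) \<in> ch_rel sA sV n"
    unfolding ch_rel_def by (rule fs.span_base)
next
  fix c x
  have m: "fsingle (as[i:=sA c x], v) - fsc c (fsingle (as[i:=x], v)) \<in> {fsingle (as[i := sA c x], v) - fsc c (fsingle (as[i := x], v)) | as i c x v.
        length as = n \<and> i < n}" unfolding mem_Collect_eq
    by (rule exI[of _ as], rule exI[of _ i], rule exI[of _ c], rule exI[of _ x], rule exI[of _ v]) (simp add: assms)
  have "fsingle (as[i:=sA c x], v) - fsc c (fsingle (as[i:=x], v)) \<in> ch_rel_gen sA sV n"
    unfolding ch_rel_gen_def by (rule UnI1[OF UnI1[OF UnI2[OF m]]])
  then show "fsingle (as[i:=sA c x], v) - fsc c (fsingle (as[i:=x], v)) \<in> ch_rel sA sV n"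
    unfolding ch_rel_def by (rule fs.span_base)
qed

lemma slot_addm_V:
  fixes sV :: "'k::field \<Rightarrow> 'v::ab_group_add \<Rightarrow> 'v"
  assumes "length as = n"
  shows "addm sV (\<lambda>w. fsingle (as, w)) (ch_rel sA sV n)"
proof (rule addmI)
  fix x y :: 'v
  have m: "fsingle (as, x+y) - fsingle (as, x) - fsingle (as, y) \<in> {fsingle (as, v + w) - fsingle (as, v) - fsingle (as, w) | as v w. length as = n}"
    unfolding mem_Collect_eq by (rule exI[of _ as], rule exI[of _ x], rule exI[of _ y]) (simp add: assms)
  have "fsingle (as, x+y) - fsingle (as, x) - fsingle (as, y) \<in> ch_rel_gen sA sV n"
    unfolding ch_rel_gen_def by (rule UnI1[OF UnI2[OF m]])
  then show "fsingle (as, x+y) - fsingle (as, x) - fsingle (as, y) \<in> ch_rel sA sV n"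
    unfolding ch_rel_def by (rule fs.span_base)
next
  fix c x
  have m: "fsingle (as, sV c x) - fsc c (fsingle (as, x)) \<in> {fsingle (as, sV c v) - fsc c (fsingle (as, v)) | as c v. length as = n}"
    unfolding mem_Collect_eq by (rule exI[of _ as], rule exI[of _ c], rule exI[of _ x]) (simp add: assms)
  have "fsingle (as, sV c x) - fsc c (fsingle (as, x)) \<in> ch_rel_gen sA sV n"
    unfolding ch_rel_gen_def by (rule UnI2[OF m])
  then show "fsingle (as, sV c x) - fsc c (fsingle (as, x)) \<in> ch_rel sA sV n"
    unfolding ch_rel_def by (rule fs.span_base)
qed

lemma slot_addm_A':
  fixes sA :: "'k::field \<Rightarrow> 'a::ab_group_add \<Rightarrow> 'a" and sV :: "'k \<Rightarrow> 'v::ab_group_add \<Rightarrow> 'v"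
    and sc :: "'k \<Rightarrow> 'y::ab_group_add \<Rightarrow> 'y" and h :: "'y \<Rightarrow> 'a"
  assumes "length as = n" "i < n" "\<And>x y. h (x + y) = h x + h y" "\<And>c x. h (sc c x) = sA c (h x)"
  shows "addm sc (\<lambda>z. fsingle (as[i:=h z], v)) (ch_rel sA sV n)"
proof (rule addmI)
  fix x y
  from slot_addm_A[OF assms(1,2), where v=v and sV=sV]
  have "fsingle (as[i:=h x + h y], v) - fsingle (as[i:=h x], v) - fsingle (as[i:=h y], v) \<in> ch_rel sA sV n"
    unfolding addm_def by blast
  then show "fsingle (as[i:=h (x + y)], v) - fsingle (as[i:=h x], v) - fsingle (as[i:=h y], v) \<in> ch_rel sA sV n"
    by (simp only: assms(3))
next
  fix c x
  from slot_addm_A[OF assms(1,2), where v=v and sV=sV]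
  have "fsingle (as[i:=sA c (h x)], v) - fsc c (fsingle (as[i:=h x], v)) \<in> ch_rel sA sV n"
    unfolding addm_def by blast
  then show "fsingle (as[i:=h (sc c x)], v) - fsc c (fsingle (as[i:=h x], v)) \<in> ch_rel sA sV n"
    by (simp only: assms(4))
qed

lemma slot_addm_V':
  fixes sA :: "'k::field \<Rightarrow> 'a::ab_group_add \<Rightarrow> 'a" and sV :: "'k \<Rightarrow> 'v::ab_group_add \<Rightarrow> 'v"
    and sc :: "'k \<Rightarrow> 'y::ab_group_add \<Rightarrow> 'y" and h :: "'y \<Rightarrow> 'v" and as :: "'a list"
  assumes "length as = n" "\<And>x y. h (x + y) = h x + h y" "\<And>c x. h (sc c x) = sV c (h x)"
  shows "addm sc (\<lambda>z. fsingle (as, h z)) (ch_rel sA sV n)"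
proof (rule addmI)
  fix x y
  from slot_addm_V[OF assms(1), where sV=sV and sA=sA]
  have "fsingle (as, h x + h y) - fsingle (as, h x) - fsingle (as, h y) \<in> ch_rel sA sV n"
    unfolding addm_def by blast
  then show "fsingle (as, h (x + y)) - fsingle (as, h x) - fsingle (as, h y) \<in> ch_rel sA sV n"
    by (simp only: assms(2))
next
  fix c x
  from slot_addm_V[OF assms(1), where sV=sV and sA=sA]
  have "fsingle (as, sV c (h x)) - fsc c (fsingle (as, h x)) \<in> ch_rel sA sV n"
    unfolding addm_def by blast
  then show "fsingle (as, h (sc c x)) - fsc c (fsingle (as, h x)) \<in> ch_rel sA sV n"
    by (simp only: assms(3))
qed

lemma map2_update1:
  "i < length xs \<Longrightarrow> i < length ys \<Longrightarrow> map2 f (xs[i:=z]) ys = (map2 f xs ys)[i := f z (ys!i)]"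
  by (rule nth_equalityI) (auto simp: nth_list_update)

lemma map2_update2:
  "i < length xs \<Longrightarrow> i < length ys \<Longrightarrow> map2 f xs (ys[i:=z]) = (map2 f xs ys)[i := f (xs!i) z]"
  by (rule nth_equalityI) (auto simp: nth_list_update)

lemma lin_face: "lin (face lA rA n j)"
  unfolding face_def[abs_def] by (rule lin_lin_ext) simp

lemma face_fsingle[simp]: "face lA rA n j (fsingle p) = fsingle (face_basis lA rA n j p)"
  by (simp add: face_def)

lemma face_len: "length as = n \<Longrightarrow> length (fst (face_basis lA rA n j (as, v))) = n - 1"
  by (auto simp: face_basis_def)

lemma fsingle_face_rep:
  "length (fst p) = n \<Longrightarrow> (fsingle (face_basis lA rA n j p) :: _ \<Rightarrow> 'k::field) \<in> ch_rep (n - 1)"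
  using face_len[of "fst p" n lA rA j "snd p"]
  by (cases "face_basis lA rA n j p") (simp add: ch_rep_def)

lemma face_rep: "t \<in> ch_rep n \<Longrightarrow> face lA rA n j t \<in> ch_rep (n - 1)"
  unfolding face_def
  by (intro lin_ext_subspace subspace_ch_rep fsingle_face_rep) (auto dest: len_ch_rep)

lemma lin_dCH: "lin (dCH lA rA n)"
  unfolding dCH_def[abs_def] by (intro lin_sum_op lin_fsc_op lin_face)


definition M :: "nat \<Rightarrow> 'a::times list \<Rightarrow> 'a list" where
  "M j as = take j as @ [as!j * as!Suc j] @ drop (Suc (Suc j)) as"
lemma M_len: "Suc j < length as \<Longrightarrow> length (M j as) = length as - 1"
  by (simp add: M_def)
lemma M_upd1: "Suc j < length as \<Longrightarrow> i < j \<Longrightarrow> M j (as[i:=z]) = (M j as)[i:=z]"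
  by (rule nth_equalityI) (auto simp: M_def nth_append nth_list_update)
lemma M_upd2: "Suc j < length as \<Longrightarrow> M j (as[j:=z]) = (M j as)[j:=z * as!Suc j]"
  by (rule nth_equalityI) (auto simp: M_def nth_append nth_list_update)
lemma M_upd3: "Suc j < length as \<Longrightarrow> M j (as[Suc j:=z]) = (M j as)[j:=as!j * z]"
  by (rule nth_equalityI) (auto simp: M_def nth_append nth_list_update)
lemma M_upd4: "Suc j < i \<Longrightarrow> i < length as \<Longrightarrow> M j (as[i:=z]) = (M j as)[i - 1:=z]"
  by (rule nth_equalityI) (auto simp: M_def nth_append nth_list_update nth_Cons')

lemma fb_merge: "Suc j < n \<Longrightarrow> face_basis lA rA n j (as, v) = (M j as, v)"
  by (simp add: face_basis_def M_def)
lemma fb_left: "Suc j = n \<Longrightarrow> face_basis lA rA n j (as, v) = (butlast as, lA (last as) v)"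
  by (simp add: face_basis_def)
lemma fb_right: "n \<le> j \<Longrightarrow> face_basis lA rA n j (as, v) = (tl as, rA v (hd as))"
  by (simp add: face_basis_def)

context hsetting
begin

abbreviation CR where "CR n \<equiv> ch_rel sA sV n"
abbreviation L where "L n b \<equiv> Lact Delta actA actV n b"
abbreviation fc where "fc n j \<equiv> face lA rA n j"
abbreviation fb where "fb n j \<equiv> face_basis lA rA n j"

definition Eb :: "nat \<Rightarrow> 'a list \<times> 'v \<Rightarrow> 'b list \<Rightarrow> ('a list \<times> 'v \<Rightarrow> 'k)" where
  "Eb n p bs = fsingle (map2 actA (take n bs) (fst p), actV (bs!n) (snd p))"

lemma Eb_fun: "Eb n (as, v) = (\<lambda>bs. fsingle (map2 actA (take n bs) as, actV (bs!n) v))"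
  by (simp add: fun_eq_iff Eb_def)

lemma Lact_fsingle: "L n b (fsingle (as, v)) = lin_ext fsc (Eb n (as, v)) (I n b)"
  by (simp add: Lact_def Eb_fun)

lemma lin_Lact: "lin (L n b)"
  unfolding Lact_def[abs_def]
  by (rule lin_lin_ext) (auto intro: fin_lin_ext)

lemma fin_Lact: "fin f \<Longrightarrow> fin (L n b f)"
  by (rule linD(3)[OF lin_Lact])

lemma Eb_rep: "length as = n \<Longrightarrow> length bs = Suc n \<Longrightarrow> Eb n (as, v) bs \<in> ch_rep n"
  unfolding Eb_def by (rule fsingle_ch_rep) simp

lemma Lact_rep: "f \<in> ch_rep n \<Longrightarrow> L n b f \<in> ch_rep n"
  unfolding Lact_def
proof (intro lin_ext_subspace subspace_ch_rep)
  fix p assume p: "p \<in> fsupp f" "f \<in> ch_rep n"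
  obtain as v where pv: "p = (as, v)" by (cases p)
  have "length as = n" using len_ch_rep[OF p(2) p(1)] pv by simp
  then have "lin_ext fsc (Eb n (as, v)) (I n b) \<in> ch_rep n"
    by (intro lin_ext_subspace subspace_ch_rep Eb_rep) (auto dest: I_len)
  then show "(case p of (as, v) \<Rightarrow> lin_ext fsc (\<lambda>bs. fsingle (map2 actA (take n bs) as, actV (bs ! n) v)) (I n b)) \<in> ch_rep n"
    by (simp add: pv Eb_fun)
qed

lemma Ev_TR:
  assumes "length as = n" "t \<in> TR (Suc n)"
  shows "lin_ext fsc (Eb n (as, v)) t \<in> CR n"
proof (rule TR_map[OF lin_lin_ext subspace_ch_rel _ assms(2)])
  show "fin (Eb n (as, v) bs)" for bs by (simp add: Eb_def)
next
  fix bs :: "'b list" and i assume bs: "length bs = Suc n" "i < Suc n"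
  show "addm sB (\<lambda>z. lin_ext fsc (Eb n (as, v)) (fsingle (bs[i := z]))) (CR n)"
  proof (cases "i < n")
    case True
    have e: "lin_ext fsc (Eb n (as, v)) (fsingle (bs[i := z])) =
        fsingle ((map2 actA (take n bs) as)[i := actA z (as!i)], actV (bs!n) v)" for z
      using True bs assms by (simp add: Eb_def take_update_swap map2_update1)
    show ?thesis unfolding e
      by (rule slot_addm_A') (use True bs assms in \<open>simp_all add: actA_lm\<close>)
  next
    case False
    then have i: "i = n" using bs by simp
    have e: "lin_ext fsc (Eb n (as, v)) (fsingle (bs[i := z])) =
        fsingle (map2 actA (take n bs) as, actV z v)" for z
      using i bs by (simp add: Eb_def)
    show ?thesis unfolding e
      by (rule slot_addm_V') (use bs assms in \<open>simp_all add: actV_lm\<close>)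
  qed
qed

lemma Lact_CR:
  assumes "t \<in> CR n"
  shows "L n b t \<in> CR n"
proof (rule CR_map[OF lin_Lact subspace_ch_rel _ _ assms])
  fix as :: "'a list" and i v assume a: "length as = n" "i < n"
  have e: "L n b (fsingle (as[i := z], v)) = lin_ext fsc (\<lambda>bs. fsingle ((map2 actA (take n bs) as)[i := actA (bs!i) z], actV (bs!n) v)) (I n b)" for z
    unfolding Lact_fsingle Eb_def
    by (rule lin_ext_cong) (use a in \<open>auto simp add: map2_update2 dest!: I_len\<close>)
  show "addm sA (\<lambda>z. L n b (fsingle (as[i := z], v))) (CR n)"
    unfolding e
    by (rule addm_family[OF slot_addm_A' subspace_ch_rel]) (use a in \<open>auto simp add: actA_lm dest!: I_len\<close>)
next
  fix as :: "'a list" assume a: "length as = n"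
  have e: "L n b (fsingle (as, w)) = lin_ext fsc (\<lambda>bs. fsingle (map2 actA (take n bs) as, actV (bs!n) w)) (I n b)" for w
    unfolding Lact_fsingle Eb_def by simp
  show "addm sV (\<lambda>w. L n b (fsingle (as, w))) (CR n)"
    unfolding e
    by (rule addm_family[OF slot_addm_V' subspace_ch_rel]) (use a in \<open>auto simp add: actV_lm dest!: I_len\<close>)
qed

end


context hsetting
begin

lemma face_slot_addm:
  assumes a: "length as = n" "i < n"
  shows "addm sA (\<lambda>z. fsingle (fb n j (as[i := z], v))) (CR (n - 1))"
proof -
  consider (m) "Suc j < n" | (l) "Suc j = n" | (r) "n \<le> j" by linarith
  then show ?thesis
  proof cases
    case m
    have ml: "length (M j as) = n - 1" using M_len[of j as] m a by simp
    consider (c1) "i < j" | (c2) "i = j" | (c3) "i = Suc j" | (c4) "Suc j < i" by linarith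
    then show ?thesis
    proof cases
      case c1
      then show ?thesis using a m ml
        by (simp add: fb_merge M_upd1 slot_addm_A)
    next
      case c2
      have "addm sA (\<lambda>z. fsingle ((M j as)[j := z * as!Suc j], v)) (CR (n - 1))"
        by (rule slot_addm_A') (use m ml in \<open>simp_all add: distrib_right kA(1)\<close>)
      then show ?thesis using a m c2 by (simp add: fb_merge M_upd2)
    next
      case c3
      have "addm sA (\<lambda>z. fsingle ((M j as)[j := as!j * z], v)) (CR (n - 1))"
        by (rule slot_addm_A') (use m ml in \<open>simp_all add: distrib_left kA(2)\<close>)
      then show ?thesis using a m c3 by (simp add: fb_merge M_upd3)
    next
      case c4
      have "addm sA (\<lambda>z. fsingle ((M j as)[i - 1 := z], v)) (CR (n - 1))"
        by (rule slot_addm_A) (use a m ml c4 in simp_all)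
      then show ?thesis using a m c4 by (simp add: fb_merge M_upd4)
    qed
  next
    case l
    show ?thesis
    proof (cases "i = n - 1")
      case True
      have "addm sA (\<lambda>z. fsingle (butlast as, lA z v)) (CR (n - 1))"
        by (rule slot_addm_V') (use a in \<open>simp_all add: bim\<close>)
      moreover have "fb n j (as[i := z], v) = (butlast as, lA z v)" for z
      proof -
        have "as \<noteq> []" using a l by auto
        then show ?thesis using a l True by (simp add: fb_left butlast_list_update last_list_update)
      qed
      ultimately show ?thesis by simp
    next
      case False
      have "addm sA (\<lambda>z. fsingle ((butlast as)[i := z], lA (last as) v)) (CR (n - 1))"
        by (rule slot_addm_A) (use a False in simp_all)
      moreover have "fb n j (as[i := z], v) = ((butlast as)[i := z], lA (last as) v)" for z
      proof -
        have "as \<noteq> []" using a l by auto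
        then show ?thesis using a l False by (auto simp add: fb_left butlast_list_update last_list_update)
      qed
      ultimately show ?thesis by simp
    qed
  next
    case r
    obtain a0 as' where as: "as = a0 # as'" using a by (cases as) auto
    show ?thesis
    proof (cases i)
      case 0
      have "addm sA (\<lambda>z. fsingle (as', rA v z)) (CR (n - 1))"
        by (rule slot_addm_V') (use a as in \<open>simp_all add: bim\<close>)
      then show ?thesis using r 0 by (simp add: fb_right as)
    next
      case (Suc i')
      have "addm sA (\<lambda>z. fsingle (as'[i' := z], rA v a0)) (CR (n - 1))"
        by (rule slot_addm_A) (use a as Suc in simp_all)
      then show ?thesis using r Suc by (simp add: fb_right as)
    qed
  qed
qed

lemma face_v_addm:
  assumes a: "length as = n"
  shows "addm sV (\<lambda>w. fsingle (fb n j (as, w))) (CR (n - 1))"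
proof -
  consider (m) "Suc j < n" | (l) "Suc j = n" | (r) "n \<le> j" by linarith
  then show ?thesis
  proof cases
    case m
    have "addm sV (\<lambda>w. fsingle (M j as, w)) (CR (n - 1))"
      by (rule slot_addm_V) (use M_len[of j as] m a in simp)
    then show ?thesis using m by (simp add: fb_merge)
  next
    case l
    have "addm sV (\<lambda>w. fsingle (butlast as, lA (last as) w)) (CR (n - 1))"
      by (rule slot_addm_V') (use a in \<open>simp_all add: bim\<close>)
    then show ?thesis using l by (simp add: fb_left)
  next
    case r
    have "addm sV (\<lambda>w. fsingle (tl as, rA w (hd as))) (CR (n - 1))"
      by (rule slot_addm_V') (use a in \<open>simp_all add: bim\<close>)
    then show ?thesis using r by (simp add: fb_right)
  qed
qed

lemma face_CR:
  assumes "t \<in> CR n"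
  shows "fc n j t \<in> CR (n - 1)"
  by (rule CR_map[OF lin_face subspace_ch_rel _ _ assms])
     (simp only: face_fsingle, erule (1) face_slot_addm, simp only: face_fsingle, erule face_v_addm)

end


lemma Lm1:
  assumes "length as = Suc k" "length bs = Suc k" "j < k"
  shows "M j (map2 f (take (Suc k) (take j bs @ [y0, y1] @ drop (Suc j) bs)) as)
       = (map2 f (take k bs) (M j as))[j := f y0 (as!j) * f y1 (as!Suc j)]"
  using assms
  by (intro nth_equalityI) (auto simp: M_def nth_append nth_list_update nth_Cons' min_def)
lemma Lm1b:
  assumes "length bs = Suc k" "j < k"
  shows "(take j bs @ [y0, y1] @ drop (Suc j) bs) ! Suc k = bs ! k"
  using assms by (auto simp: nth_append nth_Cons' min_def)
lemma Lm2:
  assumes "length as = Suc k" "length bs = Suc k"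
  shows "butlast (map2 f (take k bs @ [y0]) as) = map2 f (take k bs) (butlast as)"
    "last (map2 f (take k bs @ [y0]) as) = f y0 (last as)"
proof -
  obtain as' a where "as = as' @ [a]" using assms by (metis length_Suc_conv_rev)
  then show "butlast (map2 f (take k bs @ [y0]) as) = map2 f (take k bs) (butlast as)"
    "last (map2 f (take k bs @ [y0]) as) = f y0 (last as)" using assms by auto
qed

lemma len2_cases: "length ys = 2 \<Longrightarrow> ys = [ys!0, ys!1]"
  by (cases ys; cases "tl ys") auto

context hsetting
begin

lemma fin_Eb: "fin (Eb n p bs)" by (simp add: Eb_def)

lemma E_basis:
  assumes bs: "length bs = Suc k" and as: "length as = Suc k" and j: "j \<le> k"
  shows "lin_ext fsc (\<lambda>ys. fc (Suc k) j (Eb (Suc k) (as, v) (take j bs @ ys @ drop (Suc j) bs))) (Delta (bs!j))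
         - Eb k (fb (Suc k) j (as, v)) bs \<in> CR k"
proof (cases "j < k")
  case True
  let ?Lst = "map2 actA (take k bs) (M j as)" and ?v = "actV (bs!k) v"
  define \<phi> where "\<phi> z = (fsingle (?Lst[j := z], ?v) :: 'a list \<times> 'v \<Rightarrow> 'k)" for z
  define h where "h = (\<lambda>xs. actA (xs!0) (as!j) * actA (xs!1) (as!Suc j))"
  have ll: "length ?Lst = k" using as bs True M_len[of j as] by simp
  have ad: "addm sA \<phi> (CR k)" unfolding \<phi>_def by (rule slot_addm_A) (use ll True in simp_all)
  have 1: "Eb k (fb (Suc k) j (as, v)) bs = \<phi> (lin_ext sA h (Delta (bs!j)))"
  proof -
    have "?Lst ! j = actA (bs!j) (as!j * as!Suc j)" using True as bs by (simp add: M_def nth_append)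
    then have "?Lst[j := actA (bs!j) (as!j * as!Suc j)] = ?Lst" by (metis list_update_id)
    then show ?thesis using True by (simp add: fb_merge Eb_def \<phi>_def h_def actA_mult)
  qed
  have 2: "lin_ext fsc (\<lambda>ys. fc (Suc k) j (Eb (Suc k) (as, v) (take j bs @ ys @ drop (Suc j) bs))) (Delta (bs!j))
     = lin_ext fsc (\<lambda>x. \<phi> (h x)) (Delta (bs!j))"
  proof (rule lin_ext_cong)
    fix ys assume "ys \<in> fsupp (Delta (bs!j))"
    then have "ys = [ys!0, ys!1]" using Delta_len len2_cases by blast
    then obtain y0 y1 where ys: "ys = [y0, y1]" by blast
    show "fc (Suc k) j (Eb (Suc k) (as, v) (take j bs @ ys @ drop (Suc j) bs)) = \<phi> (h ys)"
      unfolding ys Eb_def fst_conv snd_conv face_fsingle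
      using True by (simp only: fb_merge Suc_less_eq Lm1[OF as bs True] Lm1b[OF bs True] \<phi>_def h_def
         nth_Cons_0 nth_Cons_Suc One_nat_def)
  qed
  have "\<phi> (lin_ext sA h (Delta (bs!j))) - lin_ext fsc (\<lambda>x. \<phi> (h x)) (Delta (bs!j)) \<in> CR k"
    by (rule addm_lin_ext[OF ad subspace_ch_rel])
  then have "- (\<phi> (lin_ext sA h (Delta (bs!j))) - lin_ext fsc (\<lambda>x. \<phi> (h x)) (Delta (bs!j))) \<in> CR k"
    by (rule fs.subspace_neg[OF subspace_ch_rel])
  then show ?thesis unfolding 1 2 by simp
next
  case False
  then have jk: "j = k" using j by simp
  let ?Lst = "map2 actA (take k bs) (butlast as)"
  define \<phi> where "\<phi> w = (fsingle (?Lst, w) :: 'a list \<times> 'v \<Rightarrow> 'k)" for w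
  define h where "h = (\<lambda>xs. lA (actA (xs!0) (last as)) (actV (xs!1) v))"
  have ll: "length ?Lst = k" using as bs by simp
  have ad: "addm sV \<phi> (CR k)" unfolding \<phi>_def by (rule slot_addm_V) (use ll in simp)
  have 1: "Eb k (fb (Suc k) j (as, v)) bs = \<phi> (lin_ext sV h (Delta (bs!j)))"
    using jk by (simp add: fb_left Eb_def \<phi>_def h_def equiv_l)
  have 2: "lin_ext fsc (\<lambda>ys. fc (Suc k) j (Eb (Suc k) (as, v) (take j bs @ ys @ drop (Suc j) bs))) (Delta (bs!j))
     = lin_ext fsc (\<lambda>x. \<phi> (h x)) (Delta (bs!j))"
  proof (rule lin_ext_cong)
    fix ys assume "ys \<in> fsupp (Delta (bs!j))"
    then have "ys = [ys!0, ys!1]" using Delta_len len2_cases by blast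
    then obtain y0 y1 where ys: "ys = [y0, y1]" by blast
    have t: "take (Suc k) (take k bs @ [y0, y1]) = take k bs @ [y0]" using bs by simp
    have n: "(take k bs @ [y0, y1]) ! Suc k = y1" using bs by (simp add: nth_append)
    show "fc (Suc k) j (Eb (Suc k) (as, v) (take j bs @ ys @ drop (Suc j) bs)) = \<phi> (h ys)"
      using as bs jk by (simp add: ys Eb_def fb_left t n Lm2 \<phi>_def h_def)
  qed
  have "\<phi> (lin_ext sV h (Delta (bs!j))) - lin_ext fsc (\<lambda>x. \<phi> (h x)) (Delta (bs!j)) \<in> CR k"
    by (rule addm_lin_ext[OF ad subspace_ch_rel])
  then have "- (\<phi> (lin_ext sV h (Delta (bs!j))) - lin_ext fsc (\<lambda>x. \<phi> (h x)) (Delta (bs!j))) \<in> CR k"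
    by (rule fs.subspace_neg[OF subspace_ch_rel])
  then show ?thesis unfolding 1 2 by simp
qed

end


context hsetting
begin

lemma face_comm_basis:
  assumes as: "length as = Suc k" and j: "j \<le> k"
  shows "fc (Suc k) j (L (Suc k) b (fsingle (as, v))) - L k b (fsingle (fb (Suc k) j (as, v))) \<in> CR k"
proof -
  define G where "G = (\<lambda>t. lin_ext fsc (\<lambda>bs. fc (Suc k) j (Eb (Suc k) (as, v) bs)) t)"
  have linG: "lin G" unfolding G_def by (rule lin_lin_ext) (simp add: linD(3)[OF lin_face] fin_Eb)
  have G_eq: "G t = fc (Suc k) j (lin_ext fsc (Eb (Suc k) (as, v)) t)" if "fin t" for t
    unfolding G_def by (rule lin_ext_comp[OF lin_face fin_Eb that, symmetric])
  have G_TR: "G t \<in> CR k" if "t \<in> TR (Suc (Suc k))" for t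
  proof -
    have "lin_ext fsc (Eb (Suc k) (as, v)) t \<in> CR (Suc k)" by (rule Ev_TR[OF as that])
    then have "fc (Suc k) j (lin_ext fsc (Eb (Suc k) (as, v)) t) \<in> CR (Suc k - 1)" by (rule face_CR)
    then show ?thesis using G_eq[OF fin_tens_rel[OF that]] by simp
  qed
  have A: "fc (Suc k) j (L (Suc k) b (fsingle (as, v))) = G (I (Suc k) b)"
    by (simp add: Lact_fsingle G_eq[OF I_fin])
  have B: "G (I (Suc k) b) - G (Phi j (I k b)) \<in> CR k"
  proof -
    have "G (Phi j (I k b) - I (Suc k) b) \<in> CR k" by (rule G_TR[OF gen_coassoc[OF j]])
    then have "- G (Phi j (I k b) - I (Suc k) b) \<in> CR k" by (rule fs.subspace_neg[OF subspace_ch_rel])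
    moreover have "G (Phi j (I k b) - I (Suc k) b) = G (Phi j (I k b)) - G (I (Suc k) b)"
      by (rule lin_diff[OF linG]) (simp_all add: fin_Phi I_fin)
    ultimately show ?thesis by simp
  qed
  obtain as' v' where p': "fb (Suc k) j (as, v) = (as', v')" by (cases "fb (Suc k) j (as, v)")
  have C: "G (Phi j (I k b)) - L k b (fsingle (fb (Suc k) j (as, v)))
     = lin_ext fsc (\<lambda>bs. G (Phi j (fsingle bs)) - Eb k (fb (Suc k) j (as, v)) bs) (I k b)"
    unfolding lin_ext_diff_fun p' Lact_fsingle
    by (simp add: lin_decomp[OF lin_comp[OF linG lin_Phi] I_fin])
  have D: "G (Phi j (fsingle bs)) - Eb k (fb (Suc k) j (as, v)) bs \<in> CR k" if bs: "bs \<in> fsupp (I k b)" for bs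
  proof -
    have "G (Phi j (fsingle bs)) = lin_ext fsc (\<lambda>ys. fc (Suc k) j (Eb (Suc k) (as, v) (take j bs @ ys @ drop (Suc j) bs))) (Delta (bs!j))"
    proof -
      have Gs: "G (fsingle x) = fc (Suc k) j (Eb (Suc k) (as, v) x)" for x by (simp add: G_def)
      show ?thesis
        unfolding Phi_fsingle Ctx_def by (simp only: lin_ext_comp[OF linG fin_fsingle Delta_fin] Gs)
    qed
    then show ?thesis using E_basis[OF I_len[OF bs] as j] by simp
  qed
  have "lin_ext fsc (\<lambda>bs. G (Phi j (fsingle bs)) - Eb k (fb (Suc k) j (as, v)) bs) (I k b) \<in> CR k"
    by (rule lin_ext_subspace[OF subspace_ch_rel D])
  then have "(G (I (Suc k) b) - G (Phi j (I k b))) + (G (Phi j (I k b)) - L k b (fsingle (fb (Suc k) j (as, v)))) \<in> CR k"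
    using fs.subspace_add[OF subspace_ch_rel B] C by simp
  then show ?thesis using A by simp
qed

end


context hsetting
begin

lemma map2_act_comp:
  assumes "length bs = Suc n" "length bs' = Suc n" "length as = n"
  shows "map2 actA (take n bs) (map2 actA (take n bs') as) = map2 actA (take n (map2 (*) bs bs')) as"
  using assms by (intro nth_equalityI) (auto simp: actA_lm(5))

lemma mult_basis:
  assumes as: "length as = n"
  shows "L n b (L n b' (fsingle (as, v))) - L n (b * b') (fsingle (as, v)) \<in> CR n"
proof -
  have 1: "L n b (L n b' (fsingle (as, v))) = lin_ext fsc (\<lambda>bs'. lin_ext fsc (\<lambda>bs. Eb n (as, v) (map2 (*) bs bs')) (I n b)) (I n b')"
  proof -
    have "L n b (L n b' (fsingle (as, v))) = lin_ext fsc (\<lambda>bs'. L n b (Eb n (as, v) bs')) (I n b')"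
      unfolding Lact_fsingle[of n b'] by (rule lin_ext_comp[OF lin_Lact fin_Eb I_fin])
    also have "\<dots> = lin_ext fsc (\<lambda>bs'. lin_ext fsc (\<lambda>bs. Eb n (as, v) (map2 (*) bs bs')) (I n b)) (I n b')"
    proof (rule lin_ext_cong)
      fix bs' assume bs': "bs' \<in> fsupp (I n b')"
      show "L n b (Eb n (as, v) bs') = lin_ext fsc (\<lambda>bs. Eb n (as, v) (map2 (*) bs bs')) (I n b)"
        unfolding Eb_def[of n "(as, v)" bs'] fst_conv snd_conv Lact_fsingle
      proof (rule lin_ext_cong)
        fix bs assume bs: "bs \<in> fsupp (I n b)"
        show "Eb n (map2 actA (take n bs') as, actV (bs' ! n) v) bs = Eb n (as, v) (map2 (*) bs bs')"
          using I_len[OF bs] I_len[OF bs'] as by (simp add: Eb_def map2_act_comp actV_lm(5))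
      qed
    qed
    finally show ?thesis .
  qed
  have 2: "lin_ext fsc (Eb n (as, v)) (tmul (I n b) (I n b')) = lin_ext fsc (\<lambda>bs'. lin_ext fsc (\<lambda>bs. Eb n (as, v) (map2 (*) bs bs')) (I n b)) (I n b')"
    unfolding tmul_alt2
    by (simp add: lin_ext_comp[OF lin_lin_ext[OF fin_Eb]] fin_lin_ext I_fin)
  have "lin_ext fsc (Eb n (as, v)) (I n (b * b') - tmul (I n b) (I n b')) \<in> CR n"
    by (rule Ev_TR[OF as I_mult])
  then have "- lin_ext fsc (Eb n (as, v)) (I n (b * b') - tmul (I n b) (I n b')) \<in> CR n"
    by (rule fs.subspace_neg[OF subspace_ch_rel])
  moreover have "lin_ext fsc (Eb n (as, v)) (I n (b * b') - tmul (I n b) (I n b')) =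
      lin_ext fsc (Eb n (as, v)) (I n (b * b')) - lin_ext fsc (Eb n (as, v)) (tmul (I n b) (I n b'))"
    by (rule lin_diff[OF lin_lin_ext[OF fin_Eb]]) (simp_all add: I_fin fin_tmul)
  ultimately show ?thesis using 1 2 by (simp add: Lact_fsingle)
qed

lemma S1_basis:
  assumes as: "length as = Suc (Suc n)" and j: "j \<le> n"
  shows "fb (Suc n) j (fb (Suc (Suc n)) (Suc (Suc n)) (as, v)) = fb (Suc n) (Suc n) (fb (Suc (Suc n)) (Suc j) (as, v))"
proof -
  obtain a0 as' where as': "as = a0 # as'" "length as' = Suc n" using as by (cases as) auto
  show ?thesis
  proof (cases "j < n")
    case True
    have "M (Suc j) (a0 # as') = a0 # M j as'" by (simp add: M_def)
    then show ?thesis using True as' by (simp add: fb_right fb_merge)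
  next
    case False
    then have jn: "j = n" using j by simp
    have ne: "as' \<noteq> []" using as' by auto
    then show ?thesis using jn as' by (simp add: fb_right fb_left bim(11))
  qed
qed

lemma S2_basis:
  assumes as: "length as = Suc (Suc n)"
  shows "fb (Suc n) (Suc n) (fb (Suc (Suc n)) (Suc (Suc n)) (as, v)) = fb (Suc n) (Suc n) (fb (Suc (Suc n)) 0 (as, v))"
proof -
  obtain a0 a1 rest where "as = a0 # a1 # rest" using as by (metis length_Suc_conv)
  then show ?thesis by (simp add: fb_right fb_merge M_def bim(10))
qed

lemma lin_in_rep:
  assumes "lin T" "f \<in> ch_rep n" "fs.subspace S"
    "\<And>as v. length as = n \<Longrightarrow> T (fsingle (as, v)) \<in> S"
  shows "T f \<in> S"
proof (rule lin_in_subspace[OF assms(1) fin_ch_rep[OF assms(2)] assms(3)])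
  fix p assume "p \<in> fsupp f"
  then have "length (fst p) = n" using len_ch_rep[OF assms(2)] by blast
  then show "T (fsingle p) \<in> S" using assms(4) by (cases p) auto
qed

lemma lin_eq_rep:
  assumes "lin T" "lin U" "f \<in> ch_rep n"
    "\<And>as v. length as = n \<Longrightarrow> T (fsingle (as, v)) = U (fsingle (as, v))"
  shows "T f = U f"
proof (rule lin_eq[OF assms(1,2) fin_ch_rep[OF assms(3)]])
  fix p assume "p \<in> fsupp f"
  then have "length (fst p) = n" using len_ch_rep[OF assms(3)] by blast
  then show "T (fsingle p) = U (fsingle p)" using assms(4) by (cases p) auto
qed

lemma face_comm:
  assumes f: "f \<in> ch_rep (Suc k)" and j: "j \<le> k"
  shows "fc (Suc k) j (L (Suc k) b f) - L k b (fc (Suc k) j f) \<in> CR k"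
  by (rule lin_in_rep[OF lin_diff_op[OF lin_comp[OF lin_face lin_Lact] lin_comp[OF lin_Lact lin_face]] f subspace_ch_rel])
     (simp add: face_comm_basis j)

lemma mult_comm:
  assumes f: "f \<in> ch_rep n"
  shows "L n b (L n b' f) - L n (b * b') f \<in> CR n"
  by (rule lin_in_rep[OF lin_diff_op[OF lin_comp[OF lin_Lact lin_Lact] lin_Lact] f subspace_ch_rel])
     (simp add: mult_basis)

lemma S1:
  assumes f: "f \<in> ch_rep (Suc (Suc n))" and j: "j \<le> n"
  shows "fc (Suc n) j (fc (Suc (Suc n)) (Suc (Suc n)) f) = fc (Suc n) (Suc n) (fc (Suc (Suc n)) (Suc j) f)"
  by (rule lin_eq_rep[OF lin_comp[OF lin_face lin_face] lin_comp[OF lin_face lin_face] f])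
     (simp add: S1_basis j)

lemma S2:
  assumes f: "f \<in> ch_rep (Suc (Suc n))"
  shows "fc (Suc n) (Suc n) (fc (Suc (Suc n)) (Suc (Suc n)) f) = fc (Suc n) (Suc n) (fc (Suc (Suc n)) 0 f)"
  by (rule lin_eq_rep[OF lin_comp[OF lin_face lin_face] lin_comp[OF lin_face lin_face] f])
     (simp add: S2_basis)

end


context hsetting
begin

abbreviation J where "J n \<equiv> Jsub sA sV Delta actA actV lA rA n"
abbreviation C where "C n b f \<equiv> commL Delta actA actV lA rA n b f"

lemma J_sub: "fs.subspace (J n)"
  unfolding Jsub_def by (rule fs.subspace_span)

lemma CR_J: "x \<in> CR n \<Longrightarrow> x \<in> J n"
  unfolding Jsub_def by (rule fs.span_base) (rule UnI2)

lemma C_J: "f \<in> ch_rep (Suc n) \<Longrightarrow> C n b f \<in> J n"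
  unfolding Jsub_def by (rule fs.span_base) (rule UnI1, blast)

lemma C_eq: "C n b f = L n b (fc (Suc n) (Suc n) f) - fc (Suc n) (Suc n) (L (Suc n) b f)"
  by (simp add: commL_def)

lemma lin_C: "lin (C n b)"
  unfolding commL_def[abs_def] Suc_eq_plus1[symmetric]
  by (intro lin_diff_op lin_comp[OF lin_Lact lin_face] lin_comp[OF lin_face lin_Lact])

lemma fin_CR: "t \<in> CR n \<Longrightarrow> fin t"
proof -
  assume t: "t \<in> CR n"
  have "fin g" if "g \<in> ch_rel_gen sA sV n" for g
    using that unfolding ch_rel_gen_def Un_iff mem_Collect_eq
    by (elim disjE exE conjE) (simp_all add: fin_diff fin_fsc)
  then show ?thesis
    using lin_span_map[OF lin_id fs.subspace_UNIV, of "ch_rel_gen sA sV n" t] t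
    unfolding ch_rel_def by blast
qed

lemma fin_fc: "fin f \<Longrightarrow> fin (fc n j f)" by (rule linD(3)[OF lin_face])

lemma claim3:
  assumes f: "f \<in> ch_rep (Suc n)"
  shows "dCH lA rA (Suc n) (L (Suc n) b f) - L n b (dCH lA rA (Suc n) f) \<in> J n"
proof -
  have ff: "fin f" by (rule fin_ch_rep[OF f])
  have "L n b (dCH lA rA (Suc n) f) = (\<Sum>j\<le>Suc n. fsc ((-1)^j) (L n b (fc (Suc n) j f)))"
  proof -
    have "L n b (dCH lA rA (Suc n) f) = (\<Sum>j\<le>Suc n. L n b (fsc ((-1)^j) (fc (Suc n) j f)))"
      unfolding dCH_def by (rule lin_sum[OF lin_Lact]) (intro fin_fsc fin_fc ff)
    also have "\<dots> = (\<Sum>j\<le>Suc n. fsc ((-1)^j) (L n b (fc (Suc n) j f)))"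
      by (rule sum.cong) (simp_all add: linD(2)[OF lin_Lact] fin_fc ff)
    finally show ?thesis .
  qed
  then have e: "dCH lA rA (Suc n) (L (Suc n) b f) - L n b (dCH lA rA (Suc n) f) =
     (\<Sum>j\<le>Suc n. fsc ((-1)^j) (fc (Suc n) j (L (Suc n) b f) - L n b (fc (Suc n) j f)))"
    unfolding dCH_def by (simp add: fs.scale_right_diff_distrib sum_subtractf del: sum.atMost_Suc)
  have "fc (Suc n) j (L (Suc n) b f) - L n b (fc (Suc n) j f) \<in> J n" if j: "j \<le> Suc n" for j
  proof (cases "j \<le> n")
    case True
    then show ?thesis by (intro CR_J face_comm f)
  next
    case False
    then have jn: "j = Suc n" using j by simp
    have "- C n b f \<in> J n" by (rule fs.subspace_neg[OF J_sub C_J[OF f]])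
    then show ?thesis by (simp add: jn C_eq)
  qed
  then show ?thesis unfolding e
    by (intro fs.subspace_sum[OF J_sub] fs.subspace_scale[OF J_sub]) auto
qed

lemma fc_diff: "fin x \<Longrightarrow> fin y \<Longrightarrow> fc n j (x - y) = fc n j x - fc n j y"
  by (rule lin_diff[OF lin_face])
lemma fc_add: "fin x \<Longrightarrow> fin y \<Longrightarrow> fc n j (x + y) = fc n j x + fc n j y"
  by (rule linD(1)[OF lin_face])
lemma L_diff: "fin x \<Longrightarrow> fin y \<Longrightarrow> L n b (x - y) = L n b x - L n b y"
  by (rule lin_diff[OF lin_Lact])

lemma rep_fin: "f \<in> ch_rep n \<Longrightarrow> fin f" by (rule fin_ch_rep)

lemma face_C:
  assumes f: "f \<in> ch_rep (Suc (Suc n))" and j: "j \<le> Suc n"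
  shows "fc (Suc n) j (C (Suc n) b f) \<in> J n"
proof -
  let ?m = "Suc (Suc n)"
  have ff: "fin f" using f by (rule fin_ch_rep)
  have Lf: "L ?m b f \<in> ch_rep ?m" by (rule Lact_rep[OF f])
  have g: "fc ?m ?m f \<in> ch_rep (Suc n)" using face_rep[OF f, of lA rA ?m] by simp
  have Cf: "fc (Suc n) j (C (Suc n) b f) = fc (Suc n) j (L (Suc n) b (fc ?m ?m f)) - fc (Suc n) j (fc ?m ?m (L ?m b f))"
    unfolding C_eq by (rule fc_diff) (simp_all add: fin_Lact fin_fc ff)
  show ?thesis
  proof (cases "j \<le> n")
    case True
    let ?h = "fc ?m (Suc j) f"
    have h: "?h \<in> ch_rep (Suc n)" using face_rep[OF f, of lA rA "Suc j"] by simp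
    define X1 where "X1 = fc (Suc n) j (L (Suc n) b (fc ?m ?m f)) - L n b (fc (Suc n) j (fc ?m ?m f))"
    have X1: "X1 \<in> CR n" unfolding X1_def using face_comm[OF g True] .
    define X2 where "X2 = fc ?m (Suc j) (L ?m b f) - L (Suc n) b ?h"
    have X2: "X2 \<in> CR (Suc n)" unfolding X2_def using face_comm[OF f, where j="Suc j" and b=b] True by simp
    have X2': "fc (Suc n) (Suc n) X2 \<in> CR n" using face_CR[OF X2, where j="Suc n"] by simp
    have s1: "fc (Suc n) j (fc ?m ?m f) = fc (Suc n) (Suc n) ?h" by (rule S1[OF f True])
    have s1': "fc (Suc n) j (fc ?m ?m (L ?m b f)) = fc (Suc n) (Suc n) (fc ?m (Suc j) (L ?m b f))"
      by (rule S1[OF Lf True])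
    have e2: "fc (Suc n) (Suc n) (fc ?m (Suc j) (L ?m b f)) = fc (Suc n) (Suc n) X2 + fc (Suc n) (Suc n) (L (Suc n) b ?h)"
      unfolding X2_def by (simp add: fc_diff fin_fc fin_Lact ff)
    have "fc (Suc n) j (C (Suc n) b f) = fc (Suc n) j (L (Suc n) b (fc ?m ?m f)) - fc (Suc n) j (fc ?m ?m (L ?m b f))"
      by (rule Cf)
    also have "\<dots> = (X1 + L n b (fc (Suc n) j (fc ?m ?m f))) - fc (Suc n) (Suc n) (fc ?m (Suc j) (L ?m b f))"
      by (simp only: X1_def s1' diff_add_cancel)
    also have "\<dots> = X1 + L n b (fc (Suc n) (Suc n) ?h) - (fc (Suc n) (Suc n) X2 + fc (Suc n) (Suc n) (L (Suc n) b ?h))"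
      by (simp only: s1 e2)
    also have "\<dots> = X1 - fc (Suc n) (Suc n) X2 + C n b ?h"
      by (simp add: C_eq)
    finally have "fc (Suc n) j (C (Suc n) b f) = X1 - fc (Suc n) (Suc n) X2 + C n b ?h" .
    moreover have "X1 - fc (Suc n) (Suc n) X2 + C n b ?h \<in> J n"
      by (intro fs.subspace_add[OF J_sub] fs.subspace_diff[OF J_sub] X1[THEN CR_J] X2'[THEN CR_J] C_J[OF h])
    ultimately show ?thesis by simp
  next
    case False
    then have jn: "j = Suc n" using j by simp
    let ?h0 = "fc ?m 0 f"
    have h0: "?h0 \<in> ch_rep (Suc n)" using face_rep[OF f, of lA rA 0] by simp
    define X3 where "X3 = fc ?m 0 (L ?m b f) - L (Suc n) b ?h0"
    have X3: "X3 \<in> CR (Suc n)" unfolding X3_def using face_comm[OF f, where j=0 and b=b] by simp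
    have X3': "fc (Suc n) (Suc n) X3 \<in> CR n" using face_CR[OF X3, where j="Suc n"] by simp
    have s2: "fc (Suc n) (Suc n) (fc ?m ?m f) = fc (Suc n) (Suc n) ?h0" by (rule S2[OF f])
    have s2': "fc (Suc n) (Suc n) (fc ?m ?m (L ?m b f)) = fc (Suc n) (Suc n) (fc ?m 0 (L ?m b f))"
      by (rule S2[OF Lf])
    have e3: "fc (Suc n) (Suc n) (fc ?m 0 (L ?m b f)) = fc (Suc n) (Suc n) X3 + fc (Suc n) (Suc n) (L (Suc n) b ?h0)"
      unfolding X3_def by (simp add: fc_diff fin_fc fin_Lact ff)
    have "fc (Suc n) j (C (Suc n) b f) = fc (Suc n) (Suc n) (L (Suc n) b (fc ?m ?m f)) - fc (Suc n) (Suc n) (fc ?m ?m (L ?m b f))"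
      using Cf by (simp only: jn)
    also have "\<dots> = (L n b (fc (Suc n) (Suc n) (fc ?m ?m f)) - C n b (fc ?m ?m f)) - (fc (Suc n) (Suc n) X3 + fc (Suc n) (Suc n) (L (Suc n) b ?h0))"
      by (simp only: s2' e3 C_eq[of n b "fc ?m ?m f"]) simp
    also have "\<dots> = - C n b (fc ?m ?m f) - fc (Suc n) (Suc n) X3 + C n b ?h0"
      by (simp add: C_eq[of n b ?h0] s2)
    finally have "fc (Suc n) j (C (Suc n) b f) = - C n b (fc ?m ?m f) - fc (Suc n) (Suc n) X3 + C n b ?h0" .
    moreover have "- C n b (fc ?m ?m f) - fc (Suc n) (Suc n) X3 + C n b ?h0 \<in> J n"
      by (intro fs.subspace_add[OF J_sub] fs.subspace_diff[OF J_sub] fs.subspace_neg[OF J_sub] X3'[THEN CR_J] C_J[OF h0] C_J[OF g])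
    ultimately show ?thesis by simp
  qed
qed

lemma claim1:
  assumes x: "x \<in> J (Suc n)"
  shows "dCH lA rA (Suc n) x \<in> J n"
proof -
  have gen: "fin g \<and> dCH lA rA (Suc n) g \<in> J n"
    if g: "g \<in> {C (Suc n) b f | b f. f \<in> ch_rep (Suc (Suc n))} \<union> CR (Suc n)" for g
  proof -
    from g show ?thesis
    proof
      assume "g \<in> {C (Suc n) b f | b f. f \<in> ch_rep (Suc (Suc n))}"
      then obtain b f where gf: "g = C (Suc n) b f" and f: "f \<in> ch_rep (Suc (Suc n))" by blast
      have "fin g" unfolding gf by (rule linD(3)[OF lin_C fin_ch_rep[OF f]])
      moreover have "dCH lA rA (Suc n) g \<in> J n"
        unfolding dCH_def gf
        by (intro fs.subspace_sum[OF J_sub] fs.subspace_scale[OF J_sub] face_C[OF f]) simp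
      ultimately show ?thesis by blast
    next
      assume gr: "g \<in> CR (Suc n)"
      have "fin g" by (rule fin_CR[OF gr])
      moreover have "dCH lA rA (Suc n) g \<in> J n"
        unfolding dCH_def
        by (intro fs.subspace_sum[OF J_sub] fs.subspace_scale[OF J_sub] CR_J)
           (use face_CR[OF gr] in simp)
      ultimately show ?thesis by blast
    qed
  qed
  have xs: "x \<in> fs.span ({C (Suc n) b f | b f. f \<in> ch_rep (Suc (Suc n))} \<union> CR (Suc n))"
    using x by (simp only: Jsub_def)
  show ?thesis using lin_span_map[OF lin_dCH J_sub gen xs] by blast
qed

lemma claim2:
  assumes x: "x \<in> J n"
  shows "L n b x \<in> J n"
proof -
  have gen: "fin g \<and> L n b g \<in> J n"
    if g: "g \<in> {C n b' f | b' f. f \<in> ch_rep (Suc n)} \<union> CR n" for g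
  proof -
    from g show ?thesis
    proof
      assume "g \<in> {C n b' f | b' f. f \<in> ch_rep (Suc n)}"
      then obtain b' f where gf: "g = C n b' f" and f: "f \<in> ch_rep (Suc n)" by blast
      have ff: "fin f" by (rule fin_ch_rep[OF f])
      have "fin g" unfolding gf by (rule linD(3)[OF lin_C ff])
      moreover have "L n b g \<in> J n"
      proof -
        let ?g1 = "fc (Suc n) (Suc n) f" and ?g2 = "L (Suc n) b' f"
        have g1: "?g1 \<in> ch_rep n" using face_rep[OF f, of lA rA "Suc n"] by simp
        have g2: "?g2 \<in> ch_rep (Suc n)" by (rule Lact_rep[OF f])
        define Y1 where "Y1 = L n b (L n b' ?g1) - L n (b * b') ?g1"
        have Y1: "Y1 \<in> CR n" unfolding Y1_def by (rule mult_comm[OF g1])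
        define Y2 where "Y2 = L (Suc n) b (L (Suc n) b' f) - L (Suc n) (b * b') f"
        have Y2: "Y2 \<in> CR (Suc n)" unfolding Y2_def by (rule mult_comm[OF f])
        have Y2': "fc (Suc n) (Suc n) Y2 \<in> CR n" using face_CR[OF Y2, where j="Suc n"] by simp
        have e1: "L n b g = L n b (L n b' ?g1) - L n b (fc (Suc n) (Suc n) ?g2)"
          unfolding gf C_eq by (rule L_diff) (simp_all add: fin_Lact fin_fc ff)
        have e2: "fc (Suc n) (Suc n) (L (Suc n) b ?g2) = fc (Suc n) (Suc n) Y2 + fc (Suc n) (Suc n) (L (Suc n) (b * b') f)"
          unfolding Y2_def by (simp add: fc_diff fin_fc fin_Lact ff)
        have "L n b g = L n b (L n b' ?g1) - L n b (fc (Suc n) (Suc n) ?g2)" by (rule e1)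
        also have "\<dots> = (Y1 + L n (b * b') ?g1) - (C n b ?g2 + fc (Suc n) (Suc n) (L (Suc n) b ?g2))"
          by (simp only: Y1_def C_eq[of n b ?g2] diff_add_cancel)
        also have "\<dots> = (Y1 + L n (b * b') ?g1) - (C n b ?g2 + (fc (Suc n) (Suc n) Y2 + fc (Suc n) (Suc n) (L (Suc n) (b * b') f)))"
          by (simp only: e2)
        also have "\<dots> = Y1 - C n b ?g2 - fc (Suc n) (Suc n) Y2 + C n (b * b') f"
          by (simp add: C_eq[of n "b * b'" f])
        finally have "L n b g = Y1 - C n b ?g2 - fc (Suc n) (Suc n) Y2 + C n (b * b') f" .
        moreover have "Y1 - C n b ?g2 - fc (Suc n) (Suc n) Y2 + C n (b * b') f \<in> J n"
          by (intro fs.subspace_add[OF J_sub] fs.subspace_diff[OF J_sub] Y1[THEN CR_J] Y2'[THEN CR_J] C_J[OF g2] C_J[OF f])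
        ultimately show ?thesis by simp
      qed
      ultimately show ?thesis by blast
    next
      assume gr: "g \<in> CR n"
      show ?thesis using fin_CR[OF gr] CR_J[OF Lact_CR[OF gr]] by blast
    qed
  qed
  have xs: "x \<in> fs.span ({C n b' f | b' f. f \<in> ch_rep (Suc n)} \<union> CR n)"
    using x by (simp only: Jsub_def)
  show ?thesis using lin_span_map[OF lin_Lact J_sub gen xs] by blast
qed

end


theorem proposition2p4:
  fixes sB :: "'k::field \<Rightarrow> 'b::ring_1 \<Rightarrow> 'b"
    and Delta :: "'b \<Rightarrow> 'b list \<Rightarrow> 'k"
    and eps :: "'b \<Rightarrow> 'k"
    and sA :: "'k \<Rightarrow> 'a::ring \<Rightarrow> 'a"
    and actA :: "'b \<Rightarrow> 'a \<Rightarrow> 'a"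
    and sV :: "'k \<Rightarrow> 'v::ab_group_add \<Rightarrow> 'v"
    and lA :: "'a \<Rightarrow> 'v \<Rightarrow> 'v"
    and rA :: "'v \<Rightarrow> 'a \<Rightarrow> 'v"
    and actV :: "'b \<Rightarrow> 'v \<Rightarrow> 'v"
  assumes "bialgebra sB Delta eps"
    and "module_algebra sB Delta sA actA"
    and "equivariant_bimodule sB Delta sA actA sV lA rA actV"
  defines "J \<equiv> Jsub sA sV Delta actA actV lA rA"
  shows "(\<forall>n. \<forall>x\<in>J (Suc n). dCH lA rA (Suc n) x \<in> J n)
       \<and> (\<forall>n b. \<forall>x\<in>J n. Lact Delta actA actV n b x \<in> J n)
       \<and> (\<forall>n b. \<forall>f\<in>ch_rep (Suc n).
            dCH lA rA (Suc n) (Lact Delta actA actV (Suc n) b f)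
            - Lact Delta actA actV n b (dCH lA rA (Suc n) f) \<in> J n)"
proof -
  interpret hsetting sB Delta eps sA actA sV lA rA actV
    by (rule hsetting.intro) (rule assms)+
  show ?thesis
    unfolding J_def using claim1 claim2 claim3 by blast
qed

end
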